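(* Let $A \in \mathcal{M}_d$ (a complex $d\times d$ matrix) and let $\sigma_1 \ge \dots \ge \sigma_d \ge 0$ denote the singular values of $A$ (counted with multiplicity). If $A \overline{A}$ is Hermitian (where $\overline{A}$ is the entrywise complex conjugate of $A$), then there exist a permutation $\tau$ of $\{1, \dots, d\}$, an even integer $r \le d$ and a function $\rho: \{1,\dots,r/2\} \to \{0, 1\}$ such that \[ \operatorname{tr}\left[A \overline{A}\right] = 2 \sum_{i=1}^{r/2} (-1)^{\rho(i)} \, \sigma_{\tau(2i-1)} \, \sigma_{\tau(2i)} + \sum_{i=r+1}^d \sigma_{\tau(i)}^2 . \] Conversely, given any permutation $\tau$ of $\{1,\dots,d\}$, any even integer $r \le d$, any function $\rho: \{1,\dots,r/2\} \to \{0,1\}$, and any nonnegative numbers $\sigma_1 \ge \dots \ge \sigma_d$, there exists an $A \in \mathcal{M}_d$ whose singular values are $\sigma_1,\dots,\sigma_d$ and such that $\operatorname{tr}[A\overline{A}] = 2 \sum_{i=1}^{r/2} (-1)^{\rho(i)} \sigma_{\tau(2i-1)} \sigma_{\tau(2i)} + \sum_{i=r+1}^d \sigma_{\tau(i)}^2$.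
   Context: $\mathcal{M}_d$ denotes the complex $d\times d$ matrices; $\overline{A}$ is the entrywise complex conjugate; singular values $\sigma_i(A)$ are ordered decreasingly. This result is used to minimize $\operatorname{tr}[A\overline{A}]$ over matrices with fixed singular values, which determines the tightest constant for separation witnesses of the form $(\mathbb{1}\otimes B)\mathbb{F}(\mathbb{1}\otimes B^\dagger)+w(B)\mathbb{1}$ with $\mathbb{F}$ the flip operator. *)

theory Defs
  imports "Jordan_Normal_Form.Schur_Decomposition" "HOL-Combinatorics.Permutations"
begin

definition mat_conj :: "complex mat \<Rightarrow> complex mat" where
  "mat_conj A = map_mat cnj A"

definition mat_trace :: "complex mat \<Rightarrow> complex" where
  "mat_trace M = (\<Sum>i<dim_row M. M $$ (i, i))"

definition hermitian_mat :: "complex mat \<Rightarrow> bool" where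
  "hermitian_mat M \<longleftrightarrow> dim_row M = dim_col M \<and> mat_adjoint M = M"

text \<open>\<open>sv_of A d \<sigma>\<close>: for \<open>A\<close> a complex \<open>d\<times>d\<close> matrix, \<open>\<sigma> 0 \<ge> \<sigma> 1 \<ge> \<dots> \<ge> \<sigma> (d-1) \<ge> 0\<close>
  are the singular values of \<open>A\<close> counted with multiplicity, i.e. the
  \<open>\<sigma> i ^ 2\<close> are the eigenvalues of \<open>A\<^sup>* A\<close> with algebraic multiplicity.\<close>
definition sv_of :: "complex mat \<Rightarrow> nat \<Rightarrow> (nat \<Rightarrow> real) \<Rightarrow> bool" where
  "sv_of A d \<sigma> \<longleftrightarrow> A \<in> carrier_mat d d
     \<and> (\<forall>i<d. 0 \<le> \<sigma> i) \<and> (\<forall>i j. i \<le> j \<longrightarrow> j < d \<longrightarrow> \<sigma> j \<le> \<sigma> i)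
     \<and> char_poly (mat_adjoint A * A) = (\<Prod>i<d. [:- complex_of_real ((\<sigma> i)\<^sup>2), 1:])"

definition trace_formula :: "nat \<Rightarrow> (nat \<Rightarrow> real) \<Rightarrow> (nat \<Rightarrow> nat) \<Rightarrow> nat \<Rightarrow> (nat \<Rightarrow> nat) \<Rightarrow> real" where
  "trace_formula d \<sigma> \<tau> r \<rho> =
     2 * (\<Sum>i<r div 2. (-1) ^ (\<rho> i) * \<sigma> (\<tau> (2*i)) * \<sigma> (\<tau> (2*i+1)))
     + (\<Sum>i\<in>{r..<d}. (\<sigma> (\<tau> i))\<^sup>2)"

end

theory Submission
  imports Defs
begin


lemma mult_entry: "i < dim_row A \<Longrightarrow> j < dim_col B \<Longrightarrow> dim_col A = dim_row B \<Longrightarrow>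
   (A * B) $$ (i,j) = (\<Sum>l<dim_col A. A $$ (i,l) * B $$ (l,j))"
  by (auto simp: scalar_prod_def atLeast0LessThan intro!: sum.cong)

lemmas me = mult_entry index_mult_mat(2,3)
declare index_mult_mat(1)[simp del]

lemma adj_eq: "mat_adjoint (A :: complex mat) = mat (dim_col A) (dim_row A) (\<lambda>(i,j). cnj (A $$ (j,i)))"
  unfolding mat_adjoint_def mat_of_rows_def by (rule eq_matI) auto

lemma adj_carrier[simp]: "(A :: complex mat) \<in> carrier_mat n m \<Longrightarrow> mat_adjoint A \<in> carrier_mat m n"
  by (auto simp: adj_eq)
lemma adj_dims[simp]: "dim_row (mat_adjoint (A :: complex mat)) = dim_col A" "dim_col (mat_adjoint A) = dim_row A"
  by (auto simp: adj_eq)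
lemma adj_index[simp]: "i < dim_col A \<Longrightarrow> j < dim_row A \<Longrightarrow> mat_adjoint (A :: complex mat) $$ (i,j) = cnj (A $$ (j,i))"
  by (auto simp: adj_eq)

lemma adj_adj[simp]: "mat_adjoint (mat_adjoint (A :: complex mat)) = A"
  by (rule eq_matI) auto

lemma adj_mult: assumes "(A :: complex mat) \<in> carrier_mat n k" "B \<in> carrier_mat k m"
  shows "mat_adjoint (A * B) = mat_adjoint B * mat_adjoint A"
  by (rule eq_matI, insert assms, auto simp: me mult.commute)

lemma adj_one[simp]: "mat_adjoint (1\<^sub>m n :: complex mat) = 1\<^sub>m n"
  by (rule eq_matI) auto

lemma conj_carrier[simp]: "A \<in> carrier_mat n m \<Longrightarrow> mat_conj A \<in> carrier_mat n m"
  by (auto simp: mat_conj_def)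
lemma conj_dims[simp]: "dim_row (mat_conj A) = dim_row A" "dim_col (mat_conj A) = dim_col A"
  by (auto simp: mat_conj_def)
lemma conj_index[simp]: "i < dim_row A \<Longrightarrow> j < dim_col A \<Longrightarrow> mat_conj A $$ (i,j) = cnj (A $$ (i,j))"
  by (auto simp: mat_conj_def)
lemma conj_conj[simp]: "mat_conj (mat_conj A) = A"
  by (rule eq_matI) auto
lemma conj_mult: assumes "A \<in> carrier_mat n k" "B \<in> carrier_mat k m"
  shows "mat_conj (A * B) = mat_conj A * mat_conj B"
  by (rule eq_matI, insert assms, auto simp: me)
lemma conj_one[simp]: "mat_conj (1\<^sub>m n) = 1\<^sub>m n"
  by (rule eq_matI) auto
lemma conj_adj: "mat_conj (mat_adjoint A) = transpose_mat A"
  by (rule eq_matI) auto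
lemma adj_conj: "mat_adjoint (mat_conj A) = transpose_mat A"
  by (rule eq_matI) auto

definition diagm :: "complex list \<Rightarrow> complex mat" where
  "diagm es = mat (length es) (length es) (\<lambda>(i,j). if i = j then es ! i else 0)"

lemma diagm_carrier[simp]: "diagm es \<in> carrier_mat (length es) (length es)"
  by (simp add: diagm_def)
lemma diagm_dims[simp]: "dim_row (diagm es) = length es" "dim_col (diagm es) = length es"
  by (simp_all add: diagm_def)
lemma diagm_index[simp]: "i < length es \<Longrightarrow> j < length es \<Longrightarrow> diagm es $$ (i,j) = (if i = j then es ! i else 0)"
  by (simp add: diagm_def)

lemma char_poly_diagm: "char_poly (diagm es) = (\<Prod>e\<leftarrow>es. [:-e,1:])"
proof -
  have ut: "upper_triangular (diagm es)" unfolding upper_triangular_def by auto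
  have d: "diag_mat (diagm es) = es" unfolding diag_mat_def by (rule nth_equalityI) auto
  show ?thesis using char_poly_upper_triangular[OF diagm_carrier ut] unfolding d .
qed

lemma mat_trace_comm: assumes "A \<in> carrier_mat n m" "B \<in> carrier_mat m n"
  shows "mat_trace (A * B) = mat_trace (B * A)"
proof -
  have "mat_trace (A * B) = (\<Sum>i<n. \<Sum>l<m. A $$ (i,l) * B $$ (l,i))"
    using assms by (auto simp: mat_trace_def me intro!: sum.cong)
  also have "\<dots> = (\<Sum>l<m. \<Sum>i<n. B $$ (l,i) * A $$ (i,l))"
    by (subst sum.swap) (simp add: mult.commute)
  also have "\<dots> = mat_trace (B * A)"
    using assms by (auto simp: mat_trace_def me intro!: sum.cong)
  finally show ?thesis .
qed

lemma mat_trace_diagm: "mat_trace (diagm es) = sum_list es"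
  by (simp add: mat_trace_def sum_list_sum_nth atLeast0LessThan)


lemma prod_lin_inj:
  fixes A B :: "complex multiset"
  assumes "(\<Prod>a\<in>#A. [:-a,1:]) = (\<Prod>a\<in>#B. [:-a,1:])"
  shows "A = B"
  using assms
proof (induction A arbitrary: B)
  case empty
  show ?case
  proof (rule ccontr)
    assume "{#} \<noteq> B"
    then obtain b where b: "b \<in># B" by (metis multiset_nonemptyE)
    have "poly (\<Prod>a\<in>#B. [:-a,1:]) b = 0"
      using b by (auto simp: poly_prod_mset prod_mset_zero_iff)
    with empty.prems show False by simp
  qed
next
  case (add x A)
  have "poly (\<Prod>a\<in>#add_mset x A. [:-a,1:]) x = 0" by simp
  hence "poly (\<Prod>a\<in>#B. [:-a,1:]) x = 0" unfolding add.prems .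
  hence "x \<in># B" by (auto simp: poly_prod_mset prod_mset_zero_iff)
  then obtain B' where B: "B = add_mset x B'" by (metis mset_add)
  have "[:-x,1:] * (\<Prod>a\<in>#A. [:-a,1:]) = [:-x,1:] * (\<Prod>a\<in>#B'. [:-a,1:])"
    using add.prems B by simp
  hence "(\<Prod>a\<in>#A. [:-a,1:]) = (\<Prod>a\<in>#B'. [:-a,1:])"
    by (metis mult_cancel_left pCons_eq_0_iff zero_neq_one)
  from add.IH[OF this] B show ?case by simp
qed

definition unitary :: "nat \<Rightarrow> complex mat \<Rightarrow> bool" where
  "unitary n U \<longleftrightarrow> U \<in> carrier_mat n n \<and> mat_adjoint U * U = 1\<^sub>m n"

lemma unitary_right: "unitary n U \<Longrightarrow> U * mat_adjoint U = 1\<^sub>m n"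
  unfolding unitary_def by (auto intro: mat_mult_left_right_inverse)

lemma unitary_carrier: "unitary n U \<Longrightarrow> U \<in> carrier_mat n n"
  unfolding unitary_def by auto

lemma householder:
  assumes u: "u \<in> carrier_vec n" and n: "0 < n"
    and norm: "(\<Sum>i<n. (cmod (u $ i))\<^sup>2) = 1" and u0: "u $ 0 = complex_of_real t"
  shows "\<exists>H. unitary n H \<and> col H 0 = u"
proof -
  define w where "w = vec n (\<lambda>i. (if i = 0 then 1 else 0) - u $ i)"
  define s where "s = (\<Sum>i<n. (cmod (w $ i))\<^sup>2)"
  define c where "c = 2 / s"
  define H where "H = mat n n (\<lambda>(i,j). (if i = j then 1 else 0) - complex_of_real c * w $ i * cnj (w $ j))"
  have H: "H \<in> carrier_mat n n" unfolding H_def by auto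
  have w0: "w $ 0 = complex_of_real (1 - t)" using n u0 unfolding w_def by simp
  have wi: "\<And>i. i < n \<Longrightarrow> (cmod (w $ i))\<^sup>2 = (cmod (u $ i))\<^sup>2 + (if i = 0 then 1 - 2 * t else 0)"
  proof -
    fix i assume i: "i < n"
    show "(cmod (w $ i))\<^sup>2 = (cmod (u $ i))\<^sup>2 + (if i = 0 then 1 - 2 * t else 0)"
    proof (cases "i = 0")
      case True
      have "cmod (w $ 0) = abs (1 - t)" by (simp only: w0 norm_of_real)
      moreover have "cmod (u $ 0) = abs t" by (simp only: u0 norm_of_real)
      ultimately show ?thesis using True by (simp add: power2_eq_square algebra_simps)
    next
      case False
      then show ?thesis using i unfolding w_def by (simp add: norm_minus_commute)
    qed
  qed
  have s: "s = 2 - 2 * t"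
  proof -
    have "s = (\<Sum>i<n. (cmod (u $ i))\<^sup>2) + (\<Sum>i<n. (if i = 0 then 1 - 2 * t else 0))"
      unfolding s_def sum.distrib[symmetric] by (rule sum.cong, simp_all add: wi)
    also have "\<dots> = 2 - 2 * t" using n norm by simp
    finally show ?thesis .
  qed
  have cs: "c * s = 2 \<or> (c = 0 \<and> s = 0)" unfolding c_def by auto
  have col: "col H 0 = u"
  proof (rule eq_vecI)
    show "dim_vec (col H 0) = dim_vec u" using H u by simp
    fix i assume "i < dim_vec u"
    hence i: "i < n" using u by simp
    have "col H 0 $ i = (if i = 0 then 1 else 0) - complex_of_real (c * (1 - t)) * w $ i"
      using i n w0 unfolding H_def by simp
    also have "\<dots> = u $ i"
    proof (cases "s = 0")
      case True
      hence "\<forall>j\<in>{..<n}. (cmod (w $ j))\<^sup>2 = 0"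
        unfolding s_def by (subst sum_nonneg_eq_0_iff[symmetric]) auto
      hence "w $ i = 0" using i by auto
      thus ?thesis using True i unfolding c_def w_def by simp
    next
      case False
      hence "c * (1 - t) = 1" unfolding c_def s by (simp add: field_simps)
      thus ?thesis using i unfolding w_def by simp
    qed
    finally show "col H 0 $ i = u $ i" .
  qed
  have sw: "(\<Sum>k<n. cnj (w $ k) * w $ k) = complex_of_real s"
    unfolding s_def of_real_sum by (intro sum.cong refl) (metis complex_norm_square mult.commute)
  have unit: "mat_adjoint H * H = 1\<^sub>m n"
  proof (rule eq_matI)
    fix i j assume "i < dim_row (1\<^sub>m n)" "j < dim_col (1\<^sub>m n)"
    hence i: "i < n" and j: "j < n" by auto
    define d where "d = (\<lambda>(a::nat) (b::nat). if a = b then (1::complex) else 0)"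
    define cc where "cc = complex_of_real c"
    have cnjcc: "cnj cc = cc" unfolding cc_def by simp
    have "(mat_adjoint H * H) $$ (i,j) = (\<Sum>k<n. cnj (H $$ (k,i)) * H $$ (k,j))"
      using H i j by (simp add: me)
    also have "\<dots> = (\<Sum>k<n. (d k i - cc * cnj (w $ k) * w $ i) * (d k j - cc * w $ k * cnj (w $ j)))"
      using i j unfolding H_def d_def cc_def by (intro sum.cong) auto
    also have "\<dots> = (\<Sum>k<n. d k i * d k j) - (\<Sum>k<n. d k i * (cc * w $ k * cnj (w $ j)))
       - (\<Sum>k<n. cc * cnj (w $ k) * w $ i * d k j) + cc * cc * w $ i * cnj (w $ j) * (\<Sum>k<n. cnj (w $ k) * w $ k)"
      by (simp add: algebra_simps sum.distrib sum_subtractf sum_distrib_left)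
    also have "\<dots> = d i j - 2 * cc * w $ i * cnj (w $ j) + cc * cc * w $ i * cnj (w $ j) * complex_of_real s"
      unfolding sw using i j unfolding d_def by (simp add: if_distrib if_distribR sum.If_cases algebra_simps)
    also have "\<dots> = d i j + cc * w $ i * cnj (w $ j) * (complex_of_real (c * s) - 2)"
      unfolding cc_def by (simp add: algebra_simps)
    also have "\<dots> = d i j"
    proof -
      have "complex_of_real (c * s) - 2 = 0 \<or> cc = 0" using cs unfolding cc_def
        by (metis diff_self of_real_0 of_real_numeral)
      thus ?thesis by auto
    qed
    finally show "(mat_adjoint H * H) $$ (i,j) = 1\<^sub>m n $$ (i,j)" using i j unfolding d_def by simp
  qed (insert H, auto)
  show ?thesis using H unit col unfolding unitary_def by blast
qed


lemma cp_length: "M \<in> carrier_mat n n \<Longrightarrow> char_poly M = (\<Prod>e\<leftarrow>es. [:-e,1:]) \<Longrightarrow> length es = n"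
  using degree_monic_char_poly[of M n] degree_linear_factors[of uminus es] by auto

lemma char_poly_1x1: "char_poly (mat 1 1 (\<lambda>_. e)) = [:-e,1:]"
  by (simp add: char_poly_defs det_def sign_def)

lemma unitary_similar: assumes "unitary n U" "M \<in> carrier_mat n n"
  shows "similar_mat (mat_adjoint U * M * U) M"
proof -
  have U: "U \<in> carrier_mat n n" using assms(1) unfolding unitary_def by auto
  show ?thesis unfolding similar_mat_def
    by (rule exI[of _ "mat_adjoint U"], rule exI[of _ U])
      (insert assms U unitary_right[OF assms(1)], auto simp: similar_mat_wit_def unitary_def)
qed

lemma spectral:
  fixes M :: "complex mat"
  assumes "M \<in> carrier_mat n n" "mat_adjoint M = M" "char_poly M = (\<Prod>e\<leftarrow>es. [:-e,1:])"
  shows "\<exists>U. unitary n U \<and> mat_adjoint U * M * U = diagm es"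
  using assms
proof (induction es arbitrary: n M)
  case Nil
  have n: "n = 0" using cp_length[OF Nil.prems(1) Nil.prems(3)] by simp
  show ?case
    by (rule exI[of _ "1\<^sub>m 0"], insert Nil n, auto simp: unitary_def intro!: eq_matI)
next
  case (Cons e es n M)
  from Cons.prems have M: "M \<in> carrier_mat n n" and herm: "mat_adjoint M = M"
    and cp: "char_poly M = [:-e,1:] * (\<Prod>e\<leftarrow>es. [:-e,1:])" by auto
  have len: "length (e # es) = n" using cp_length[OF M Cons.prems(3)] .
  define n1 where "n1 = length es"
  have n: "n = Suc n1" using len n1_def by simp
  have ev: "eigenvalue M e" unfolding eigenvalue_root_char_poly[OF M] cp by simp
  define v where "v = find_eigenvector M e"
  from find_eigenvector[OF M ev] have "eigenvector M v e" unfolding v_def .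
  hence v: "v \<in> carrier_vec n" and v0: "v \<noteq> 0\<^sub>v n" and Mv: "M *\<^sub>v v = e \<cdot>\<^sub>v v"
    using M unfolding eigenvector_def by auto
  define nv where "nv = sqrt (\<Sum>i<n. (cmod (v $ i))\<^sup>2)"
  obtain i0 where i0: "i0 < n" "v $ i0 \<noteq> 0"
  proof (rule ccontr)
    assume "\<not> thesis"
    hence "\<forall>i<n. v $ i = 0" using that by auto
    hence "v = 0\<^sub>v n" using v by (intro eq_vecI) auto
    with v0 show False by simp
  qed
  have spos: "0 < (\<Sum>i<n. (cmod (v $ i))\<^sup>2)"
    by (rule sum_pos2[of _ i0]) (use i0 in auto)
  hence nvpos: "nv > 0" unfolding nv_def by simp
  have nv2: "nv\<^sup>2 = (\<Sum>i<n. (cmod (v $ i))\<^sup>2)" unfolding nv_def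
    by (simp add: sum_nonneg)
  define th where "th = (if v $ 0 = 0 then 1 else cnj (v $ 0) / complex_of_real (cmod (v $ 0)))"
  have th: "cmod th = 1" unfolding th_def by (auto simp: norm_divide)
  define u where "u = (th / complex_of_real nv) \<cdot>\<^sub>v v"
  have u: "u \<in> carrier_vec n" using v unfolding u_def by simp
  have ui: "\<And>i. i < n \<Longrightarrow> (cmod (u $ i))\<^sup>2 = (cmod (v $ i))\<^sup>2 / nv\<^sup>2"
    using v nvpos th unfolding u_def by (auto simp: norm_mult norm_divide power_divide power_mult_distrib)
  have unorm: "(\<Sum>i<n. (cmod (u $ i))\<^sup>2) = 1"
    using spos by (simp add: ui sum_divide_distrib[symmetric] nv2)
  have u0: "u $ 0 = complex_of_real (cmod (v $ 0) / nv)"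
  proof (cases "v $ 0 = 0")
    case True
    thus ?thesis using v n unfolding u_def th_def by simp
  next
    case False
    have "cnj (v $ 0) * v $ 0 = complex_of_real ((cmod (v $ 0))\<^sup>2)"
      by (metis complex_norm_square mult.commute)
    thus ?thesis using False v n unfolding u_def th_def
      by (simp add: power2_eq_square field_simps)
  qed
  have Mu: "M *\<^sub>v u = e \<cdot>\<^sub>v u"
    unfolding u_def by (simp add: mult_mat_vec[OF M v] Mv smult_smult_assoc mult.commute)
  obtain U1 where U1: "unitary n U1" and cU1: "col U1 0 = u"
    using householder[OF u _ unorm u0] n by auto
  have U1c: "U1 \<in> carrier_mat n n" and U1l: "mat_adjoint U1 * U1 = 1\<^sub>m n"
    and U1r: "U1 * mat_adjoint U1 = 1\<^sub>m n"
    using U1 unitary_right[OF U1] unfolding unitary_def by auto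
  define M' where "M' = mat_adjoint U1 * M * U1"
  have M'c: "M' \<in> carrier_mat n n" unfolding M'_def using U1c M by auto
  have M'herm: "mat_adjoint M' = M'"
  proof -
    have "mat_adjoint M' = mat_adjoint U1 * mat_adjoint (mat_adjoint U1 * M)"
      unfolding M'_def by (rule adj_mult[of _ n n _ n]) (use U1c M in auto)
    also have "mat_adjoint (mat_adjoint U1 * M) = mat_adjoint M * U1"
      by (subst adj_mult[of _ n n _ n]) (use U1c M in auto)
    also have "mat_adjoint U1 * (mat_adjoint M * U1) = M'"
      unfolding M'_def herm by (rule assoc_mult_mat[symmetric]) (use U1c M in auto)
    finally show ?thesis .
  qed
  have colM': "col M' 0 = e \<cdot>\<^sub>v unit_vec n 0"
  proof -
    have "col M' 0 = (mat_adjoint U1 * M) *\<^sub>v col U1 0"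
      unfolding M'_def by (rule col_mult2) (use U1c M n in auto)
    also have "\<dots> = mat_adjoint U1 *\<^sub>v (M *\<^sub>v u)" unfolding cU1
      by (rule assoc_mult_mat_vec) (use U1c M u in auto)
    also have "\<dots> = e \<cdot>\<^sub>v (mat_adjoint U1 *\<^sub>v u)" unfolding Mu
      by (rule mult_mat_vec) (use U1c u in auto)
    also have "mat_adjoint U1 *\<^sub>v u = col (mat_adjoint U1 * U1) 0" unfolding cU1[symmetric]
      by (rule col_mult2[symmetric]) (use U1c n in auto)
    also have "\<dots> = unit_vec n 0" unfolding U1l using n by simp
    finally show ?thesis .
  qed
  have col0: "\<And>i. i < n \<Longrightarrow> M' $$ (i,0) = (if i = 0 then e else 0)"
  proof -
    fix i assume i: "i < n"
    have "M' $$ (i,0) = col M' 0 $ i" using M'c i n by simp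
    thus "M' $$ (i,0) = (if i = 0 then e else 0)" unfolding colM' using i n by simp
  qed
  have hermi: "\<And>a b. a < n \<Longrightarrow> b < n \<Longrightarrow> M' $$ (a,b) = cnj (M' $$ (b,a))"
  proof -
    fix a b assume "a < n" "b < n"
    hence "mat_adjoint M' $$ (a,b) = cnj (M' $$ (b,a))" using M'c by simp
    thus "M' $$ (a,b) = cnj (M' $$ (b,a))" unfolding M'herm .
  qed
  have ereal: "cnj e = e" using hermi[of 0 0] col0[of 0] n by simp
  have row0: "\<And>j. j < n \<Longrightarrow> M' $$ (0,j) = (if j = 0 then e else 0)"
    using hermi[of 0] col0 n ereal by auto
  define M3 where "M3 = mat n1 n1 (\<lambda>(i,j). M' $$ (Suc i, Suc j))"
  have M3c: "M3 \<in> carrier_mat n1 n1" unfolding M3_def by simp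
  have split: "M' = four_block_mat (mat 1 1 (\<lambda>_. e)) (0\<^sub>m 1 n1) (0\<^sub>m n1 1) M3"
  proof (rule eq_matI)
    fix i j assume ij: "i < dim_row (four_block_mat (mat 1 1 (\<lambda>_. e)) (0\<^sub>m 1 n1) (0\<^sub>m n1 1) M3)"
      "j < dim_col (four_block_mat (mat 1 1 (\<lambda>_. e)) (0\<^sub>m 1 n1) (0\<^sub>m n1 1) M3)"
    hence i: "i < Suc n1" and j: "j < Suc n1" using M3c by auto
    show "M' $$ (i,j) = four_block_mat (mat 1 1 (\<lambda>_. e)) (0\<^sub>m 1 n1) (0\<^sub>m n1 1) M3 $$ (i,j)"
      using i j M3c col0 row0 n unfolding M3_def by (cases i; cases j) auto
  qed (use M'c M3c n in auto)
  have "char_poly M' = char_poly M"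
    by (rule char_poly_similar, unfold M'_def, rule unitary_similar[OF U1 M])
  also have "char_poly M' = [:-e,1:] * char_poly M3"
    unfolding split char_poly_1x1[symmetric]
    by (rule char_poly_four_block_zeros_col) (use M3c in auto)
  finally have cp3: "char_poly M3 = (\<Prod>e\<leftarrow>es. [:-e,1:])" unfolding cp
    by (metis mult_cancel_left pCons_eq_0_iff zero_neq_one)
  have herm3: "mat_adjoint M3 = M3"
  proof (rule eq_matI)
    fix i j assume "i < dim_row M3" "j < dim_col M3"
    hence i: "i < n1" and j: "j < n1" using M3c by auto
    have "cnj (M' $$ (Suc j, Suc i)) = M' $$ (Suc i, Suc j)"
      using hermi[of "Suc i" "Suc j"] i j n by simp
    thus "mat_adjoint M3 $$ (i, j) = M3 $$ (i, j)" using i j unfolding M3_def by simp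
  qed (use M3c in auto)
  obtain U3 where U3: "unitary n1 U3" and D3: "mat_adjoint U3 * M3 * U3 = diagm es"
    using Cons.IH[OF M3c herm3 cp3] by auto
  have U3c: "U3 \<in> carrier_mat n1 n1" and U3l: "mat_adjoint U3 * U3 = 1\<^sub>m n1"
    using U3 unfolding unitary_def by auto
  define Bm where "Bm = four_block_mat (1\<^sub>m 1) (0\<^sub>m 1 n1) (0\<^sub>m n1 1) U3"
  have Bmc: "Bm \<in> carrier_mat n n" unfolding Bm_def using U3c n by auto
  have adjBm: "mat_adjoint Bm = four_block_mat (1\<^sub>m 1) (0\<^sub>m 1 n1) (0\<^sub>m n1 1) (mat_adjoint U3)"
    by (rule eq_matI) (use U3c in \<open>auto simp: Bm_def\<close>)
  define U where "U = U1 * Bm"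
  have Uc: "U \<in> carrier_mat n n" unfolding U_def using U1c Bmc by auto
  have adjU: "mat_adjoint (U1 * Bm) = mat_adjoint Bm * mat_adjoint U1"
    by (rule adj_mult) (use U1c Bmc in auto)
  have BB: "mat_adjoint Bm * Bm = 1\<^sub>m n"
  proof -
    have "mat_adjoint Bm * Bm = four_block_mat (1\<^sub>m 1 * 1\<^sub>m 1 + 0\<^sub>m 1 n1 * 0\<^sub>m n1 1) (1\<^sub>m 1 * 0\<^sub>m 1 n1 + 0\<^sub>m 1 n1 * U3)
       (0\<^sub>m n1 1 * 1\<^sub>m 1 + mat_adjoint U3 * 0\<^sub>m n1 1) (0\<^sub>m n1 1 * 0\<^sub>m 1 n1 + mat_adjoint U3 * U3)"
      unfolding adjBm unfolding Bm_def by (rule mult_four_block_mat) (use U3c in auto)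
    also have "\<dots> = four_block_mat (1\<^sub>m 1) (0\<^sub>m 1 n1) (0\<^sub>m n1 1) (1\<^sub>m n1)"
      unfolding U3l using U3c by simp
    also have "\<dots> = 1\<^sub>m n" by (rule eq_matI) (auto simp: n)
    finally show ?thesis .
  qed
  have unitU: "unitary n U"
  proof -
    have "mat_adjoint U * U = mat_adjoint Bm * mat_adjoint U1 * (U1 * Bm)"
      unfolding U_def adjU ..
    also have "\<dots> = mat_adjoint Bm * (mat_adjoint U1 * (U1 * Bm))"
      by (rule assoc_mult_mat) (use U1c Bmc in auto)
    also have "mat_adjoint U1 * (U1 * Bm) = (mat_adjoint U1 * U1) * Bm"
      by (rule assoc_mult_mat[symmetric]) (use U1c Bmc in auto)
    also have "\<dots> = Bm" unfolding U1l using Bmc by simp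
    also have "mat_adjoint Bm * Bm = 1\<^sub>m n" by (rule BB)
    finally show ?thesis using Uc unfolding unitary_def by simp
  qed
  have p1: "mat_adjoint U3 * M3 \<in> carrier_mat n1 n1" using U3c M3c by auto
  have p2: "mat_adjoint U3 * M3 * U3 \<in> carrier_mat n1 n1" using U3c M3c by auto
  have "mat_adjoint U * M * U = mat_adjoint Bm * M' * Bm"
  proof -
    have aU1: "mat_adjoint U1 \<in> carrier_mat n n" using U1c by simp
    have aBm: "mat_adjoint Bm \<in> carrier_mat n n" using Bmc by simp
    have "mat_adjoint U * M * U = mat_adjoint Bm * mat_adjoint U1 * M * (U1 * Bm)"
      unfolding U_def adjU ..
    also have "\<dots> = mat_adjoint Bm * mat_adjoint U1 * M * U1 * Bm"
      by (rule assoc_mult_mat[symmetric]) (use aU1 aBm M U1c Bmc in auto)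
    also have "mat_adjoint Bm * mat_adjoint U1 * M = mat_adjoint Bm * (mat_adjoint U1 * M)"
      by (rule assoc_mult_mat) (use aU1 aBm M in auto)
    also have "mat_adjoint Bm * (mat_adjoint U1 * M) * U1 = mat_adjoint Bm * (mat_adjoint U1 * M * U1)"
      by (rule assoc_mult_mat) (use aU1 aBm M U1c in auto)
    finally show ?thesis unfolding M'_def .
  qed
  also have "mat_adjoint Bm * M' = four_block_mat (mat 1 1 (\<lambda>_. e)) (0\<^sub>m 1 n1) (0\<^sub>m n1 1) (mat_adjoint U3 * M3)"
  proof -
    have "mat_adjoint Bm * M' = four_block_mat (1\<^sub>m 1 * mat 1 1 (\<lambda>_. e) + 0\<^sub>m 1 n1 * 0\<^sub>m n1 1) (1\<^sub>m 1 * 0\<^sub>m 1 n1 + 0\<^sub>m 1 n1 * M3)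
       (0\<^sub>m n1 1 * mat 1 1 (\<lambda>_. e) + mat_adjoint U3 * 0\<^sub>m n1 1) (0\<^sub>m n1 1 * 0\<^sub>m 1 n1 + mat_adjoint U3 * M3)"
      unfolding adjBm split by (rule mult_four_block_mat) (use U3c M3c in auto)
    also have "\<dots> = four_block_mat (mat 1 1 (\<lambda>_. e)) (0\<^sub>m 1 n1) (0\<^sub>m n1 1) (mat_adjoint U3 * M3)"
      using U3c M3c p1 p2 by simp
    finally show ?thesis .
  qed
  also have "\<dots> * Bm = four_block_mat (mat 1 1 (\<lambda>_. e)) (0\<^sub>m 1 n1) (0\<^sub>m n1 1) (mat_adjoint U3 * M3 * U3)"
  proof -
    have "four_block_mat (mat 1 1 (\<lambda>_. e)) (0\<^sub>m 1 n1) (0\<^sub>m n1 1) (mat_adjoint U3 * M3) * Bm =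
      four_block_mat (mat 1 1 (\<lambda>_. e) * 1\<^sub>m 1 + 0\<^sub>m 1 n1 * 0\<^sub>m n1 1) (mat 1 1 (\<lambda>_. e) * 0\<^sub>m 1 n1 + 0\<^sub>m 1 n1 * U3)
       (0\<^sub>m n1 1 * 1\<^sub>m 1 + (mat_adjoint U3 * M3) * 0\<^sub>m n1 1) (0\<^sub>m n1 1 * 0\<^sub>m 1 n1 + (mat_adjoint U3 * M3) * U3)"
      unfolding Bm_def by (rule mult_four_block_mat) (use U3c M3c in auto)
    also have "\<dots> = four_block_mat (mat 1 1 (\<lambda>_. e)) (0\<^sub>m 1 n1) (0\<^sub>m n1 1) (mat_adjoint U3 * M3 * U3)"
      using U3c M3c p1 p2 by simp
    finally show ?thesis .
  qed
  also have "\<dots> = diagm (e # es)" unfolding D3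
    by (rule eq_matI) (auto simp: n1_def nth_Cons')
  finally show ?case using unitU by blast
qed


definition pm :: "(real \<times> real \<times> nat) list \<Rightarrow> real multiset" where
  "pm P = mset (concat (map (\<lambda>(a,b,s). [a,b]) P))"
definition val :: "(real \<times> real \<times> nat) list \<Rightarrow> real list \<Rightarrow> real" where
  "val P T = 2 * (\<Sum>(a,b,s)\<leftarrow>P. (-1)^s * a * b) + (\<Sum>x\<leftarrow>T. x\<^sup>2)"
definition rok :: "(real \<times> real \<times> nat) list \<Rightarrow> bool" where
  "rok P \<longleftrightarrow> (\<forall>(a,b,s)\<in>set P. s \<in> {0,1})"

lemma pm_append[simp]: "pm (P1 @ P2) = pm P1 + pm P2" by (simp add: pm_def)
lemma val_append: "val (P1 @ P2) (T1 @ T2) = val P1 T1 + val P2 T2" by (simp add: val_def algebra_simps)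
lemma rok_append[simp]: "rok (P1 @ P2) \<longleftrightarrow> rok P1 \<and> rok P2" unfolding rok_def set_append ball_Un by simp

lemma rep_mset_add: "replicate_mset (m + n) a = replicate_mset m a + replicate_mset n a" by (induct m) auto

lemma pairing:
  fixes S :: "real multiset"
  assumes "\<forall>x\<in>#S. x > 0" "image_mset (\<lambda>x. \<mu> / x) S = S" "\<mu> > 0"
  shows "\<exists>as m. S = mset (concat (map (\<lambda>a. [a, \<mu> / a]) as)) + replicate_mset m (sqrt \<mu>)"
  using assms
proof (induction "size S" arbitrary: S rule: less_induct)
  case less
  show ?case
  proof (cases "S = {#}")
    case True
    show ?thesis by (rule exI[of _ "[]"], rule exI[of _ 0]) (simp add: True)
  next
    case False
    then obtain x where x: "x \<in># S" by (metis multiset_nonemptyE)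
    then obtain S' where S': "S = add_mset x S'" by (metis mset_add)
    have xpos: "x > 0" using less.prems(1) x by auto
    show ?thesis
    proof (cases "x = sqrt \<mu>")
      case True
      have "\<mu> / x = x" using True less.prems(3)
        by (metis real_div_sqrt less_imp_le)
      hence "image_mset (\<lambda>x. \<mu> / x) S' = S'" using less.prems(2) unfolding S' by simp
      moreover have "size S' < size S" unfolding S' by simp
      moreover have "\<forall>x\<in>#S'. x > 0" using less.prems(1) unfolding S' by simp
      ultimately obtain as m where "S' = mset (concat (map (\<lambda>a. [a, \<mu> / a]) as)) + replicate_mset m (sqrt \<mu>)"
        using less.hyps less.prems(3) by blast
      thus ?thesis unfolding S' using True
        by (intro exI[of _ as] exI[of _ "Suc m"]) simp
    next
      case False
      define y where "y = \<mu> / x"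
      have ypos: "y > 0" unfolding y_def using xpos less.prems(3) by simp
      have yx: "y \<noteq> x"
      proof
        assume "y = x"
        hence "x * x = \<mu>" unfolding y_def using xpos by (simp add: field_simps)
        hence "sqrt \<mu> = sqrt (x * x)" by simp
        hence "x = sqrt \<mu>" using xpos by simp
        thus False using False by simp
      qed
      have "y \<in># image_mset (\<lambda>x. \<mu> / x) S" unfolding y_def using x by auto
      hence "y \<in># S" using less.prems(2) by simp
      hence "y \<in># S'" using yx unfolding S' by simp
      then obtain S'' where S'': "S' = add_mset y S''" by (metis mset_add)
      have xy: "\<mu> / y = x" unfolding y_def using xpos less.prems(3) by simp
      have "add_mset x (add_mset y (image_mset (\<lambda>x. \<mu> / x) S'')) = add_mset x (add_mset y S'')"
        using less.prems(2) unfolding S' S'' by (simp add: add_mset_commute y_def[symmetric] xy)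
      hence inv: "image_mset (\<lambda>x. \<mu> / x) S'' = S''" by simp
      have "size S'' < size S" unfolding S' S'' by simp
      moreover have "\<forall>x\<in>#S''. x > 0" using less.prems(1) unfolding S' S'' by simp
      ultimately obtain as m where IH: "S'' = mset (concat (map (\<lambda>a. [a, \<mu> / a]) as)) + replicate_mset m (sqrt \<mu>)"
        using less.hyps less.prems(3) inv by blast
      show ?thesis unfolding S' S'' IH
        by (intro exI[of _ "x # as"] exI[of _ m]) (simp add: y_def)
    qed
  qed
qed

lemma comb_nonzero:
  fixes S :: "real multiset" and l :: real
  assumes pos: "\<forall>x\<in>#S. x > 0" and inv: "image_mset (\<lambda>x. \<bar>l\<bar> / x) S = S" and l: "l \<noteq> 0"
    and ev: "l < 0 \<Longrightarrow> even (size S)"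
  shows "\<exists>P T. S = pm P + mset T \<and> val P T = l * size S \<and> rok P"
proof -
  define \<mu> where "\<mu> = \<bar>l\<bar>"
  have mu: "\<mu> > 0" using l unfolding \<mu>_def by simp
  obtain as m where S: "S = mset (concat (map (\<lambda>a. [a, \<mu> / a]) as)) + replicate_mset m (sqrt \<mu>)"
    using pairing[OF pos inv[folded \<mu>_def] mu] by blast
  have asp: "\<And>a. a \<in> set as \<Longrightarrow> a > 0" using pos unfolding S by auto
  have prod: "\<And>a. a \<in> set as \<Longrightarrow> a * (\<mu> / a) = \<mu>" using asp by (simp add: less_imp_neq[symmetric])
  have sz: "size S = 2 * length as + m" unfolding S by (induction as) auto
  have sq: "(sqrt \<mu>)\<^sup>2 = \<mu>" using mu by simp
  show ?thesis
  proof (cases "l > 0")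
    case True
    define P where "P = map (\<lambda>a. (a, \<mu> / a, 0::nat)) as"
    define T where "T = replicate m (sqrt \<mu>)"
    have "S = pm P + mset T" unfolding S P_def T_def pm_def by (simp add: comp_def)
    moreover have "val P T = l * size S"
    proof -
      have "(\<Sum>(a,b,s)\<leftarrow>P. (-1)^s * a * b) = (\<Sum>a\<leftarrow>as. \<mu>)"
        unfolding P_def by (simp add: comp_def, intro arg_cong[of _ _ sum_list] map_cong refl) (auto dest: asp)
      thus ?thesis unfolding val_def sz T_def using True sq unfolding \<mu>_def
        by (simp add: sum_list_triv sum_list_replicate algebra_simps)
    qed
    moreover have "rok P" unfolding rok_def P_def by auto
    ultimately show ?thesis by blast
  next
    case False
    hence lneg: "l < 0" using l by simp
    have em: "even m" using ev[OF lneg] unfolding sz by simp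
    define P where "P = map (\<lambda>a. (a, \<mu> / a, 1::nat)) as @ replicate (m div 2) (sqrt \<mu>, sqrt \<mu>, 1)"
    have rep: "mset (concat (map (\<lambda>(a,b,s). [a,b]) (replicate q (sqrt \<mu>, sqrt \<mu>, 1::nat)))) = replicate_mset (2 * q) (sqrt \<mu>)" for q
      by (induction q) auto
    have "S = pm P + mset []" unfolding S P_def pm_def using rep[of "m div 2"] em by (simp add: comp_def)
    moreover have "val P [] = l * size S"
    proof -
      have "(\<Sum>(a,b,s)\<leftarrow>map (\<lambda>a. (a, \<mu> / a, 1::nat)) as. (-1)^s * a * b) = (\<Sum>a\<leftarrow>as. - \<mu>)"
        by (simp add: comp_def, intro arg_cong[of _ _ sum_list] map_cong refl) (use asp in force)
      moreover have "(\<Sum>(a,b,s)\<leftarrow>replicate (m div 2) (sqrt \<mu>, sqrt \<mu>, 1::nat). (-1)^s * a * b) = real (m div 2) * (- \<mu>)"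
        using sq by (simp add: power2_eq_square sum_list_replicate)
      ultimately show ?thesis unfolding val_def sz P_def using lneg em unfolding \<mu>_def
        by (simp add: sum_list_triv sum_list_replicate algebra_simps real_of_nat_div)
    qed
    moreover have "rok P" unfolding rok_def P_def by auto
    ultimately show ?thesis by blast
  qed
qed

lemma comb_zero:
  fixes ps :: "real list"
  assumes "length ps \<le> z"
  shows "\<exists>P T. mset ps + replicate_mset z 0 = pm P + mset T \<and> val P T = 0 \<and> rok P"
proof -
  define P where "P = map (\<lambda>a. (a, 0::real, 0::nat)) ps"
  define T where "T = replicate (z - length ps) (0::real)"
  have "mset (concat (map (\<lambda>(a,b,s). [a,b]) P)) = mset ps + replicate_mset (length ps) 0"
    unfolding P_def by (induction ps) auto
  hence "mset ps + replicate_mset z 0 = pm P + mset T" unfolding pm_def T_def using assms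
    by (simp add: rep_mset_add[symmetric])
  moreover have "val P T = 0" unfolding val_def P_def T_def by (simp add: comp_def sum_list_replicate)
  moreover have "rok P" unfolding rok_def P_def by auto
  ultimately show ?thesis by blast
qed


interpretation cnj_hom: comm_ring_hom cnj
  by (unfold_locales) simp_all

lemma det_conj: "det (mat_conj A) = cnj (det A)"
  unfolding mat_conj_def by (rule cnj_hom.hom_det)

lemma adj_transp: "mat_adjoint (A :: complex mat) = transpose_mat (mat_conj A)"
  by (rule eq_matI) auto

lemma det_adj: "A \<in> carrier_mat n n \<Longrightarrow> det (mat_adjoint A) = cnj (det A)"
  unfolding adj_transp by (subst det_transpose[of _ n]) (auto simp: det_conj)

lemma adj_conj_comm: "mat_adjoint (mat_conj A) = mat_conj (mat_adjoint A)"
  by (rule eq_matI) auto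

lemma adj_smult: "mat_adjoint (c \<cdot>\<^sub>m A) = cnj c \<cdot>\<^sub>m mat_adjoint A"
  by (rule eq_matI) auto

lemma conj_smult: "mat_conj (c \<cdot>\<^sub>m A) = cnj c \<cdot>\<^sub>m mat_conj A"
  by (rule eq_matI) auto

lemma det_diagm: "det (diagm es) = prod_list es"
proof -
  have ut: "upper_triangular (diagm es)" unfolding upper_triangular_def by auto
  have d: "diag_mat (diagm es) = es" unfolding diag_mat_def by (rule nth_equalityI) auto
  show ?thesis using det_upper_triangular[OF ut diagm_carrier] unfolding d .
qed

lemma cp_length2: "M \<in> carrier_mat n n \<Longrightarrow> char_poly M = (\<Prod>x\<leftarrow>xs. [:f x,1:]) \<Longrightarrow> length xs = n"
  using degree_monic_char_poly[of M n] degree_linear_factors[of f xs] by auto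

lemma prod_list_mset: "(\<Prod>x\<leftarrow>xs. f x) = (\<Prod>x\<in>#mset xs. f x)"
  by (induction xs) auto

lemma prod_list_perm: "mset xs = mset ys \<Longrightarrow> (\<Prod>x\<leftarrow>xs. f x) = (\<Prod>x\<leftarrow>ys. (f x :: 'a :: comm_monoid_mult))"
  unfolding prod_list_mset by simp

lemma sum_split_at: "(\<Sum>l<z + (r::nat). f l) = (\<Sum>l<z. f l) + (\<Sum>l<r. f (z + l))"
  by (induction r) (auto simp: add.assoc)

lemma det_row_zero: assumes A: "A \<in> carrier_mat n n" and i: "i < n" and z: "\<And>j. j < n \<Longrightarrow> A $$ (i,j) = 0"
  shows "det A = 0"
proof -
  have "\<And>p. p permutes {0..<n} \<Longrightarrow> (\<Prod>i = 0..<n. A $$ (i, p i)) = 0"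
  proof -
    fix p assume p: "p permutes {0..<n}"
    have "p i < n" using p i by (meson atLeastLessThan_iff permutes_in_image zero_le)
    hence "A $$ (i, p i) = 0" using z by simp
    thus "(\<Prod>i = 0..<n. A $$ (i, p i)) = 0" using i by (intro prod_zero) auto
  qed
  thus ?thesis unfolding det_def using A by auto
qed

lemma diagm_mult: "length as = length bs \<Longrightarrow> diagm as * diagm bs = diagm (map2 (*) as bs)"
  by (rule eq_matI) (auto simp: me if_distrib if_distribR sum.If_cases)

lemma conj_diagm: "mat_conj (diagm es) = diagm (map cnj es)"
  by (rule eq_matI) auto

lemma adj_diagm: "mat_adjoint (diagm es) = diagm (map cnj es)"
  by (rule eq_matI) auto


lemma smult_mult_smult: assumes "A \<in> carrier_mat n m" "B \<in> carrier_mat m p"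
  shows "(a \<cdot>\<^sub>m A) * (b \<cdot>\<^sub>m B) = ((a::complex) * b) \<cdot>\<^sub>m (A * B)"
  by (rule eq_matI, insert assms, auto simp: me sum_distrib_left algebra_simps)

lemma smult_one_mult: assumes "B \<in> carrier_mat n m"
  shows "(a \<cdot>\<^sub>m 1\<^sub>m n) * B = (a::complex) \<cdot>\<^sub>m B"
  using assms by (simp add: mult_smult_assoc_mat[of _ n n B m])

lemma mult_smult_one: assumes "B \<in> carrier_mat m n"
  shows "B * (a \<cdot>\<^sub>m 1\<^sub>m n) = (a::complex) \<cdot>\<^sub>m B"
  using assms by (simp add: mult_smult_distrib[of B m n _ n])

lemma mset_filter_split: "mset (filter P xs @ filter (\<lambda>x. \<not> P x) xs) = mset xs"
  by (induction xs) auto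

lemma block:
  fixes C :: "complex mat" and l :: real and xs :: "real list"
  assumes C: "C \<in> carrier_mat k k" and CC: "C * mat_conj C = complex_of_real l \<cdot>\<^sub>m 1\<^sub>m k"
    and nn: "\<forall>x\<in>set xs. 0 \<le> x"
    and cp: "char_poly (mat_adjoint C * C) = (\<Prod>x\<leftarrow>xs. [:- complex_of_real (x\<^sup>2), 1:])"
  shows "\<exists>P T. mset xs = pm P + mset T \<and> val P T = l * k \<and> rok P"
proof -
  define sq where "sq = (\<lambda>x::real. complex_of_real (x\<^sup>2))"
  define X where "X = mat_adjoint C * C"
  have Xc: "X \<in> carrier_mat k k" using C unfolding X_def by auto
  have Xh: "mat_adjoint X = X" unfolding X_def
    by (subst adj_mult[of "mat_adjoint C" k k C k]) (use C in auto)
  have lenxs: "length xs = k"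
    using cp_length2[of X k "\<lambda>x. - complex_of_real (x\<^sup>2)" xs] Xc cp unfolding X_def by simp
  define ps where "ps = filter (\<lambda>x. x \<noteq> 0) xs"
  define zs where "zs = filter (\<lambda>x. \<not> x \<noteq> 0) xs"
  define ys where "ys = ps @ zs"
  have mys: "mset ys = mset xs" unfolding ys_def ps_def zs_def by (rule mset_filter_split)
  have setys: "set ys = set xs" using mys by (metis set_mset_mset)
  have lenys: "length ys = k" using mys lenxs by (metis size_mset)
  define es where "es = map sq ys"
  have lenes: "length es = k" unfolding es_def using lenys by simp
  have cpX: "char_poly X = (\<Prod>e\<leftarrow>es. [:-e,1:])"
  proof -
    have "char_poly X = (\<Prod>x\<leftarrow>ys. [:- complex_of_real (x\<^sup>2), 1:])"
      unfolding X_def cp by (rule prod_list_perm) (use mys in simp)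
    thus ?thesis unfolding es_def sq_def by (simp add: comp_def)
  qed
  obtain V where V: "unitary k V" and VXV: "mat_adjoint V * X * V = diagm es"
    using spectral[OF Xc Xh cpX] by blast
  have Vc: "V \<in> carrier_mat k k" and VV: "mat_adjoint V * V = 1\<^sub>m k" and VV': "V * mat_adjoint V = 1\<^sub>m k"
    using V unitary_right[OF V] unfolding unitary_def by auto
  define D where "D = diagm es"
  have Dc: "D \<in> carrier_mat k k" unfolding D_def using lenes by (metis diagm_carrier)
  define W where "W = C * V"
  define Z where "Z = mat_adjoint V * mat_conj W"
  have Wc: "W \<in> carrier_mat k k" unfolding W_def using C Vc by auto
  have Zc: "Z \<in> carrier_mat k k" unfolding Z_def using Wc Vc by auto
  have mc: "\<And>(A::complex mat) B. A \<in> carrier_mat k k \<Longrightarrow> B \<in> carrier_mat k k \<Longrightarrow> A * B \<in> carrier_mat k k" by auto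
  have as: "\<And>(A::complex mat) B E. A \<in> carrier_mat k k \<Longrightarrow> B \<in> carrier_mat k k \<Longrightarrow> E \<in> carrier_mat k k \<Longrightarrow> A * B * E = A * (B * E)"
    by (rule assoc_mult_mat; assumption)
  have am: "\<And>(A::complex mat) B. A \<in> carrier_mat k k \<Longrightarrow> B \<in> carrier_mat k k \<Longrightarrow> mat_adjoint (A * B) = mat_adjoint B * mat_adjoint A"
    by (rule adj_mult; assumption)
  have cm: "\<And>(A::complex mat) B. A \<in> carrier_mat k k \<Longrightarrow> B \<in> carrier_mat k k \<Longrightarrow> mat_conj (A * B) = mat_conj A * mat_conj B"
    by (rule conj_mult; assumption)
  have VVB: "\<And>(B::complex mat). B \<in> carrier_mat k k \<Longrightarrow> V * (mat_adjoint V * B) = B"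
  proof -
    fix B :: "complex mat" assume B: "B \<in> carrier_mat k k"
    have "V * (mat_adjoint V * B) = (V * mat_adjoint V) * B" using as[of V "mat_adjoint V" B] B Vc by simp
    thus "V * (mat_adjoint V * B) = B" unfolding VV' using B by simp
  qed
  have cVV: "mat_conj V * mat_conj (mat_adjoint V) = 1\<^sub>m k"
    using cm[of V "mat_adjoint V"] VV' Vc by simp
  have CCB: "\<And>(B::complex mat). B \<in> carrier_mat k k \<Longrightarrow> C * (mat_conj C * B) = complex_of_real l \<cdot>\<^sub>m B"
  proof -
    fix B :: "complex mat" assume B: "B \<in> carrier_mat k k"
    have "C * (mat_conj C * B) = (C * mat_conj C) * B" using as[of C "mat_conj C" B] B C by simp
    also have "\<dots> = complex_of_real l \<cdot>\<^sub>m B" unfolding CC using B by (rule smult_one_mult)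
    finally show "C * (mat_conj C * B) = complex_of_real l \<cdot>\<^sub>m B" .
  qed
  have esreal: "map cnj es = es" unfolding es_def sq_def by simp
  have F1: "mat_adjoint W * W = D"
    unfolding W_def D_def VXV[symmetric] X_def using C Vc by (simp add: am as mc)
  have F2: "mat_adjoint Z * Z = D"
  proof -
    have "mat_conj D = mat_adjoint Z * Z"
      unfolding Z_def W_def D_def VXV[symmetric] X_def using C Vc
      by (simp add: am as mc cm adj_conj_comm VVB)
    moreover have "mat_conj D = D" unfolding D_def conj_diagm esreal ..
    ultimately show ?thesis by simp
  qed
  have F3: "W * Z = complex_of_real l \<cdot>\<^sub>m mat_conj V"
    unfolding Z_def W_def using C Vc by (simp add: am as mc cm VVB CCB)
  show ?thesis
  proof (cases "l = 0")
    case True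
    define r where "r = length ps"
    define z where "z = length zs"
    have kr: "k = z + r" using lenys unfolding ys_def r_def z_def by simp
    have WZ0: "W * Z = 0\<^sub>m k k" unfolding F3 True using Vc by (intro eq_matI) auto
    have DZ0: "D * Z = 0\<^sub>m k k"
    proof -
      have "D * Z = mat_adjoint W * (W * Z)" unfolding F1[symmetric] using Wc Zc by (simp add: as)
      thus ?thesis unfolding WZ0 using Wc by simp
    qed
    have Zrow: "\<And>i j. i < r \<Longrightarrow> j < k \<Longrightarrow> Z $$ (i,j) = 0"
    proof -
      fix i j assume i: "i < r" and j: "j < k"
      have ik: "i < k" using i kr by simp
      have "0 = (D * Z) $$ (i,j)" unfolding DZ0 using ik j by simp
      also have "\<dots> = (\<Sum>l<k. D $$ (i,l) * Z $$ (l,j))" using Dc Zc ik j by (simp add: me)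
      also have "\<dots> = (\<Sum>l<k. if l = i then es ! i * Z $$ (i,j) else 0)"
        using Dc ik lenes unfolding D_def by (intro sum.cong) auto
      also have "\<dots> = es ! i * Z $$ (i,j)" using ik by simp
      finally have e: "es ! i * Z $$ (i,j) = 0" by simp
      have "ys ! i = ps ! i" unfolding ys_def using i r_def by (simp add: nth_append)
      moreover have "ps ! i \<noteq> 0" using nth_mem[of i ps] i unfolding r_def ps_def by auto
      ultimately have "es ! i \<noteq> 0" unfolding es_def sq_def using ik lenys by simp
      thus "Z $$ (i,j) = 0" using e by simp
    qed
    have rz: "r \<le> z"
    proof (rule ccontr)
      assume "\<not> r \<le> z"
      hence zr: "z < r" by simp
      define P where "P = mat r r (\<lambda>(i,j). Z $$ (z + i, j))"
      have Pc: "P \<in> carrier_mat r r" unfolding P_def by simp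
      have PP: "mat_adjoint P * P = diagm (take r es)"
      proof (rule eq_matI)
        fix i j assume "i < dim_row (diagm (take r es))" "j < dim_col (diagm (take r es))"
        hence i: "i < r" and j: "j < r" using lenes kr by auto
        have "(mat_adjoint P * P) $$ (i,j) = (\<Sum>l<r. cnj (Z $$ (z + l, i)) * Z $$ (z + l, j))"
          using Pc i j unfolding P_def by (simp add: me)
        also have "\<dots> = (\<Sum>l<z. cnj (Z $$ (l, i)) * Z $$ (l, j)) + (\<Sum>l<r. cnj (Z $$ (z + l, i)) * Z $$ (z + l, j))"
          using Zrow zr i kr by simp
        also have "\<dots> = (\<Sum>l<k. cnj (Z $$ (l, i)) * Z $$ (l, j))" unfolding kr by (rule sum_split_at[symmetric])
        also have "\<dots> = (mat_adjoint Z * Z) $$ (i,j)" using Zc i j kr by (simp add: me)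
        also have "\<dots> = diagm (take r es) $$ (i,j)" unfolding F2 D_def using i j kr lenes by simp
        finally show "(mat_adjoint P * P) $$ (i,j) = diagm (take r es) $$ (i,j)" .
      qed (use Pc lenes kr in auto)
      have "det P = 0"
        by (rule det_row_zero[OF Pc, of 0]) (use zr Zrow kr in \<open>auto simp: P_def\<close>)
      hence "det (mat_adjoint P * P) = 0" using Pc by (simp add: det_mult[of _ r])
      hence "prod_list (take r es) = 0" unfolding PP det_diagm .
      then obtain e where "e \<in> set (take r es)" "e = 0" by (metis prod_list_zero_iff)
      then obtain i where i: "i < r" "es ! i = 0" using lenes kr by (auto simp: in_set_conv_nth)
      have "ys ! i = ps ! i" unfolding ys_def using i r_def by (simp add: nth_append)
      moreover have "ps ! i \<noteq> 0" using nth_mem[of i ps] i unfolding r_def ps_def by auto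
      ultimately have "es ! i \<noteq> 0" unfolding es_def sq_def using i kr lenys by simp
      thus False using i by simp
    qed
    obtain P T where PT: "mset ps + replicate_mset z 0 = pm P + mset T" "val P T = 0" "rok P"
      using comb_zero[of ps z] rz unfolding r_def by blast
    have "zs = replicate z 0" unfolding z_def zs_def by (simp add: replicate_length_same)
    hence "mset xs = mset ps + replicate_mset z 0" using mys unfolding ys_def by simp
    thus ?thesis using PT True by auto
  next
    case False
    have l: "l \<noteq> 0" using False .
    have dC: "det C * cnj (det C) = complex_of_real (l ^ k)"
    proof -
      have "det C * cnj (det C) = det (C * mat_conj C)"
        using C by (simp add: det_mult[of _ k] det_conj)
      also have "\<dots> = complex_of_real (l ^ k)" unfolding CC using C by simp
      finally show ?thesis .
    qed
    have "complex_of_real ((cmod (det C))\<^sup>2) = complex_of_real (l ^ k)"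
      unfolding dC[symmetric] by (rule complex_norm_square)
    hence lk: "(cmod (det C))\<^sup>2 = l ^ k" by (simp only: of_real_eq_iff)
    have dCnz: "det C \<noteq> 0" using lk l by auto
    have evk: "l < 0 \<Longrightarrow> even k"
    proof (rule ccontr)
      assume "l < 0" "\<not> even k"
      hence "l ^ k < 0" by (simp add: power_less_zero_eq)
      thus False unfolding lk[symmetric] by simp
    qed
    have "det X = cnj (det C) * det C" unfolding X_def using C by (simp add: det_mult[of _ k] det_adj)
    hence dXnz: "det X \<noteq> 0" using dCnz by simp
    have "similar_mat D X" unfolding D_def VXV[symmetric] by (rule unitary_similar[OF V Xc])
    hence "det D = det X" by (rule det_similar)
    hence "prod_list es \<noteq> 0" using dXnz unfolding D_def det_diagm by simp
    hence ynz: "\<And>y. y \<in> set ys \<Longrightarrow> y \<noteq> 0" unfolding es_def sq_def by (auto simp: prod_list_zero_iff)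
    have ypos: "\<And>y. y \<in> set ys \<Longrightarrow> y > 0" using ynz nn setys by force
    define Dinv where "Dinv = diagm (map (\<lambda>y. complex_of_real (1 / y\<^sup>2)) ys)"
    define D' where "D' = diagm (map (\<lambda>y. complex_of_real (l\<^sup>2 / y\<^sup>2)) ys)"
    have Dinvc: "Dinv \<in> carrier_mat k k" unfolding Dinv_def using lenys by (metis diagm_carrier length_map)
    have D'c: "D' \<in> carrier_mat k k" unfolding D'_def using lenys by (metis diagm_carrier length_map)
    have DinvD: "Dinv * D = 1\<^sub>m k"
      unfolding Dinv_def D_def es_def sq_def using lenys ynz
      by (subst diagm_mult) (auto intro!: eq_matI simp: nth_mem)
    have DDinv: "D * Dinv = 1\<^sub>m k"
      unfolding Dinv_def D_def es_def sq_def using lenys ynz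
      by (subst diagm_mult) (auto intro!: eq_matI simp: nth_mem)
    have DDB: "\<And>B. B \<in> carrier_mat k k \<Longrightarrow> Dinv * (D * B) = B"
    proof -
      fix B :: "complex mat" assume B: "B \<in> carrier_mat k k"
      have "Dinv * (D * B) = (Dinv * D) * B" using as[OF Dinvc Dc B] by simp
      thus "Dinv * (D * B) = B" unfolding DinvD using B by simp
    qed
    define Zi where "Zi = Dinv * mat_adjoint Z"
    have Zic: "Zi \<in> carrier_mat k k" unfolding Zi_def using Dinvc Zc by auto
    have ZiZ: "Zi * Z = 1\<^sub>m k"
    proof -
      have "Zi * Z = Dinv * (mat_adjoint Z * Z)" unfolding Zi_def using Dinvc Zc by (simp add: as)
      thus ?thesis unfolding F2 DinvD .
    qed
    have ZZi: "Z * Zi = 1\<^sub>m k" by (rule mat_mult_left_right_inverse[OF Zic Zc ZiZ])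
    have Z4: "mat_adjoint Z * D * Z = complex_of_real (l\<^sup>2) \<cdot>\<^sub>m 1\<^sub>m k"
    proof -
      have aW: "mat_adjoint W \<in> carrier_mat k k" and aZ: "mat_adjoint Z \<in> carrier_mat k k" using Wc Zc by auto
      have "mat_adjoint Z * D * Z = mat_adjoint Z * (D * Z)" using as[OF aZ Dc Zc] .
      also have "D * Z = mat_adjoint W * (W * Z)" unfolding F1[symmetric] using as[OF aW Wc Zc] .
      also have "mat_adjoint Z * (mat_adjoint W * (W * Z)) = (mat_adjoint Z * mat_adjoint W) * (W * Z)"
        using as[OF aZ aW mc[OF Wc Zc]] by simp
      also have "mat_adjoint Z * mat_adjoint W = mat_adjoint (W * Z)" using am[OF Wc Zc] by simp
      also have "mat_adjoint (W * Z) * (W * Z) = (complex_of_real l \<cdot>\<^sub>m mat_adjoint (mat_conj V)) * (complex_of_real l \<cdot>\<^sub>m mat_conj V)"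
        unfolding F3 adj_smult by simp
      also have "\<dots> = (complex_of_real l * complex_of_real l) \<cdot>\<^sub>m (mat_adjoint (mat_conj V) * mat_conj V)"
        by (rule smult_mult_smult) (use Vc in auto)
      also have "mat_adjoint (mat_conj V) * mat_conj V = 1\<^sub>m k"
        unfolding adj_conj_comm cm[of "mat_adjoint V" V, symmetric, OF adj_carrier[OF Vc] Vc] VV by simp
      finally show ?thesis by (simp add: power2_eq_square)
    qed
    have adjZ: "mat_adjoint Z = D * Zi"
    proof -
      have "D * Zi = D * Dinv * mat_adjoint Z" unfolding Zi_def using Dc Dinvc Zc by (simp add: as)
      thus ?thesis unfolding DDinv using Zc by simp
    qed
    have ZiDZ: "Zi * D * Z = D'"
    proof -
      have "Zi * D * Z = Dinv * (D * Zi * D * Z)" using Dc Dinvc Zic Zc by (simp add: as DDB)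
      also have "D * Zi * D * Z = complex_of_real (l\<^sup>2) \<cdot>\<^sub>m 1\<^sub>m k" unfolding adjZ[symmetric] Z4 ..
      also have "Dinv * \<dots> = complex_of_real (l\<^sup>2) \<cdot>\<^sub>m Dinv" using Dinvc by (rule mult_smult_one)
      also have "\<dots> = D'" unfolding Dinv_def D'_def by (rule eq_matI) auto
      finally show ?thesis .
    qed
    have DZ: "D * Z = Z * D'"
    proof -
      have "Z * D' = Z * Zi * (D * Z)" unfolding ZiDZ[symmetric] using Zc Zic Dc by (simp add: as)
      thus ?thesis unfolding ZZi using Dc Zc by simp
    qed
    have "D = Z * D' * Zi"
    proof -
      have "Z * D' * Zi = D * (Z * Zi)" unfolding DZ[symmetric] using Zc Zic Dc by (simp add: as)
      thus ?thesis unfolding ZZi using Dc by simp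
    qed
    hence "similar_mat D D'" unfolding similar_mat_def similar_mat_wit_def
      using Dc D'c Zc Zic ZZi ZiZ by (intro exI[of _ Z] exI[of _ Zi]) auto
    hence "char_poly D = char_poly D'" by (rule char_poly_similar)
    hence "(\<Prod>e\<in>#image_mset sq (mset ys). [:-e,1:]) = (\<Prod>e\<in>#image_mset (\<lambda>y. complex_of_real (l\<^sup>2 / y\<^sup>2)) (mset ys). [:-e,1:])"
      unfolding D_def D'_def char_poly_diagm prod_list_mset es_def by simp
    hence "image_mset sq (mset ys) = image_mset (\<lambda>y. complex_of_real (l\<^sup>2 / y\<^sup>2)) (mset ys)"
      by (rule prod_lin_inj)
    hence "image_mset (\<lambda>c. sqrt (Re c)) (image_mset sq (mset ys)) =
       image_mset (\<lambda>c. sqrt (Re c)) (image_mset (\<lambda>y. complex_of_real (l\<^sup>2 / y\<^sup>2)) (mset ys))" by simp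
    hence "image_mset (\<lambda>y. sqrt (Re (sq y))) (mset ys) = image_mset (\<lambda>y. sqrt (l\<^sup>2 / y\<^sup>2)) (mset ys)"
      by (simp add: image_mset.compositionality comp_def)
    moreover have "image_mset (\<lambda>y. sqrt (Re (sq y))) (mset ys) = mset ys"
      by (rule image_mset_cong[where g = id, simplified]) (auto simp: sq_def dest!: ypos)
    moreover have "image_mset (\<lambda>y. sqrt (l\<^sup>2 / y\<^sup>2)) (mset ys) = image_mset (\<lambda>y. \<bar>l\<bar> / y) (mset ys)"
      by (rule image_mset_cong) (auto simp: real_sqrt_divide dest!: ypos)
    ultimately have inv: "image_mset (\<lambda>y. \<bar>l\<bar> / y) (mset xs) = mset xs" unfolding mys by simp
    have pos: "\<forall>x\<in>#mset xs. x > 0" using ypos setys by simp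
    have "size (mset xs) = k" using lenxs by simp
    thus ?thesis using comb_nonzero[OF pos inv l] evk by auto
  qed
qed


lemma conj_four_block: fixes A D :: "complex mat" assumes "A \<in> carrier_mat k k" "D \<in> carrier_mat m m"
  shows "mat_conj (four_block_mat A (0\<^sub>m k m) (0\<^sub>m m k) D) = four_block_mat (mat_conj A) (0\<^sub>m k m) (0\<^sub>m m k) (mat_conj D)"
  using assms unfolding carrier_mat_def by (intro eq_matI) auto

lemma adj_four_block_diag: fixes A D :: "complex mat" assumes "A \<in> carrier_mat k k" "D \<in> carrier_mat m m"
  shows "mat_adjoint (four_block_mat A (0\<^sub>m k m) (0\<^sub>m m k) D) = four_block_mat (mat_adjoint A) (0\<^sub>m k m) (0\<^sub>m m k) (mat_adjoint D)"
  using assms unfolding carrier_mat_def by (intro eq_matI) auto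

lemma block_mult_diag: assumes "A1 \<in> carrier_mat k k" "D1 \<in> carrier_mat m m" "A2 \<in> carrier_mat k k" "D2 \<in> carrier_mat m m"
  shows "four_block_mat A1 (0\<^sub>m k m) (0\<^sub>m m k) D1 * four_block_mat A2 (0\<^sub>m k m) (0\<^sub>m m k) D2 =
    four_block_mat (A1 * A2) (0\<^sub>m k m) (0\<^sub>m m k) (D1 * D2)"
proof -
  have "four_block_mat A1 (0\<^sub>m k m) (0\<^sub>m m k) D1 * four_block_mat A2 (0\<^sub>m k m) (0\<^sub>m m k) D2 =
    four_block_mat (A1 * A2 + 0\<^sub>m k m * 0\<^sub>m m k) (A1 * 0\<^sub>m k m + 0\<^sub>m k m * D2)
    (0\<^sub>m m k * A2 + D1 * 0\<^sub>m m k) (0\<^sub>m m k * 0\<^sub>m k m + D1 * D2)"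
    by (rule mult_four_block_mat) (use assms in auto)
  also have "\<dots> = four_block_mat (A1 * A2) (0\<^sub>m k m) (0\<^sub>m m k) (D1 * D2)"
  proof -
    have "A1 * A2 \<in> carrier_mat k k" "D1 * D2 \<in> carrier_mat m m" using assms by auto
    thus ?thesis using assms by simp
  qed
  finally show ?thesis .
qed

lemma diagm_mult_left: assumes "B \<in> carrier_mat n m" "length es = n" "i < n" "j < m"
  shows "(diagm es * B) $$ (i,j) = es ! i * B $$ (i,j)"
proof -
  have "(diagm es * B) $$ (i,j) = (\<Sum>l<n. diagm es $$ (i,l) * B $$ (l,j))" using assms by (simp add: me)
  also have "\<dots> = (\<Sum>l<n. if l = i then es ! i * B $$ (i,j) else 0)"
    by (intro sum.cong refl) (use assms in auto)
  also have "\<dots> = es ! i * B $$ (i,j)" using assms by simp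
  finally show ?thesis .
qed

lemma diagm_mult_right: assumes "B \<in> carrier_mat m n" "length es = n" "i < m" "j < n"
  shows "(B * diagm es) $$ (i,j) = B $$ (i,j) * es ! j"
proof -
  have "(B * diagm es) $$ (i,j) = (\<Sum>l<n. B $$ (i,l) * diagm es $$ (l,j))" using assms by (simp add: me)
  also have "\<dots> = (\<Sum>l<n. if l = j then B $$ (i,j) * es ! j else 0)"
    by (intro sum.cong refl) (use assms in auto)
  also have "\<dots> = B $$ (i,j) * es ! j" using assms by simp
  finally show ?thesis .
qed

lemma main:
  fixes A :: "complex mat"
  assumes "A \<in> carrier_mat n n" "hermitian_mat (A * mat_conj A)" "\<forall>x\<in>set xs. 0 \<le> x"
    "char_poly (mat_adjoint A * A) = (\<Prod>x\<leftarrow>xs. [:- complex_of_real (x\<^sup>2), 1:])"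
  shows "\<exists>P T. mset xs = pm P + mset T \<and> mat_trace (A * mat_conj A) = complex_of_real (val P T) \<and> rok P"
  using assms
proof (induction n arbitrary: A xs rule: less_induct)
  case (less n A xs)
  have A: "A \<in> carrier_mat n n" and herm: "hermitian_mat (A * mat_conj A)" and nn: "\<forall>x\<in>set xs. 0 \<le> x"
    and cp: "char_poly (mat_adjoint A * A) = (\<Prod>x\<leftarrow>xs. [:- complex_of_real (x\<^sup>2), 1:])" using less.prems by auto
  have lenxs: "length xs = n"
  proof -
    have "mat_adjoint A * A \<in> carrier_mat n n" using A by auto
    from cp_length2[OF this cp] show ?thesis .
  qed
  show ?case
  proof (cases "n = 0")
    case True
    have "mat_trace (A * mat_conj A) = 0" using A True by (simp add: mat_trace_def)
    thus ?thesis using lenxs True by (intro exI[of _ "[]"]) (auto simp: pm_def val_def rok_def)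
  next
    case False
    define sq where "sq = (\<lambda>x::real. complex_of_real (x\<^sup>2))"
    define M where "M = A * mat_conj A"
    have Mc: "M \<in> carrier_mat n n" unfolding M_def using A by auto
    have Mh: "mat_adjoint M = M" using herm unfolding hermitian_mat_def M_def by simp
    obtain es0 where es0: "char_poly M = (\<Prod>a\<leftarrow>es0. [:-a,1:])" "length es0 = n"
      using char_poly_factorized[OF Mc] by blast
    define e0 where "e0 = hd es0"
    define es1 where "es1 = filter (\<lambda>x. x = e0) es0"
    define es2 where "es2 = filter (\<lambda>x. \<not> x = e0) es0"
    define es where "es = es1 @ es2"
    define k where "k = length es1"
    define n2 where "n2 = length es2"
    have mes: "mset es = mset es0" unfolding es_def es1_def es2_def by (rule mset_filter_split)
    have nk: "n = k + n2" using mes es0(2) unfolding es_def k_def n2_def by (metis length_append size_mset)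
    have "es0 \<noteq> []" using es0(2) False by auto
    hence "e0 \<in> set es0" unfolding e0_def by simp
    hence "es1 \<noteq> []" unfolding es1_def by (auto simp: filter_empty_conv)
    hence k0: "k > 0" unfolding k_def by simp
    have es1r: "es1 = replicate k e0" unfolding k_def es1_def by (simp add: replicate_length_same)
    have cpM: "char_poly M = (\<Prod>e\<leftarrow>es. [:-e,1:])" unfolding es0(1) by (rule prod_list_perm) (use mes in simp)
    obtain U where U: "unitary n U" and UMU: "mat_adjoint U * M * U = diagm es"
      using spectral[OF Mc Mh cpM] by blast
    have Uc: "U \<in> carrier_mat n n" and UU: "mat_adjoint U * U = 1\<^sub>m n" and UU': "U * mat_adjoint U = 1\<^sub>m n"
      using U unitary_right[OF U] unfolding unitary_def by auto
    define D where "D = diagm es"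
    have lenes: "length es = n" using nk unfolding es_def k_def n2_def by simp
    have Dc: "D \<in> carrier_mat n n" unfolding D_def using lenes by (metis diagm_carrier)
    have mc: "\<And>(A::complex mat) B. A \<in> carrier_mat n n \<Longrightarrow> B \<in> carrier_mat n n \<Longrightarrow> A * B \<in> carrier_mat n n" by auto
    have as: "\<And>(A::complex mat) B E. A \<in> carrier_mat n n \<Longrightarrow> B \<in> carrier_mat n n \<Longrightarrow> E \<in> carrier_mat n n \<Longrightarrow> A * B * E = A * (B * E)"
      by (rule assoc_mult_mat; assumption)
    have am: "\<And>(A::complex mat) B. A \<in> carrier_mat n n \<Longrightarrow> B \<in> carrier_mat n n \<Longrightarrow> mat_adjoint (A * B) = mat_adjoint B * mat_adjoint A"
      by (rule adj_mult; assumption)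
    have cm: "\<And>(A::complex mat) B. A \<in> carrier_mat n n \<Longrightarrow> B \<in> carrier_mat n n \<Longrightarrow> mat_conj (A * B) = mat_conj A * mat_conj B"
      by (rule conj_mult; assumption)
    have UUB: "\<And>(B::complex mat). B \<in> carrier_mat n n \<Longrightarrow> U * (mat_adjoint U * B) = B"
    proof -
      fix B :: "complex mat" assume B: "B \<in> carrier_mat n n"
      have "U * (mat_adjoint U * B) = (U * mat_adjoint U) * B" using as[of U "mat_adjoint U" B] B Uc by simp
      thus "U * (mat_adjoint U * B) = B" unfolding UU' using B by simp
    qed
    have cUU: "mat_conj U * mat_conj (mat_adjoint U) = 1\<^sub>m n"
      using cm[of U "mat_adjoint U"] UU' Uc by simp
    have cUUB: "\<And>(B::complex mat). B \<in> carrier_mat n n \<Longrightarrow> mat_conj U * (mat_conj (mat_adjoint U) * B) = B"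
    proof -
      fix B :: "complex mat" assume B: "B \<in> carrier_mat n n"
      have "mat_conj U * (mat_conj (mat_adjoint U) * B) = (mat_conj U * mat_conj (mat_adjoint U)) * B"
        using as[of "mat_conj U" "mat_conj (mat_adjoint U)" B] B Uc by simp
      thus "mat_conj U * (mat_conj (mat_adjoint U) * B) = B" unfolding cUU using B by simp
    qed
    have cU: "unitary n (mat_conj U)"
    proof -
      have "mat_adjoint (mat_conj U) * mat_conj U = mat_conj (mat_adjoint U * U)"
        unfolding adj_conj_comm using cm[of "mat_adjoint U" U] Uc by simp
      thus ?thesis unfolding unitary_def UU using Uc by simp
    qed
    have Dh: "mat_adjoint D = D"
      unfolding D_def UMU[symmetric] using Uc Mc by (simp add: am as mc Mh)
    have esreal: "map cnj es = es"
    proof -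
      have "diagm (map cnj es) = diagm es" using Dh unfolding D_def adj_diagm .
      hence "\<forall>i<n. cnj (es ! i) = es ! i" using lenes by (metis diagm_index length_map nth_map)
      thus ?thesis using lenes by (intro nth_equalityI) auto
    qed
    have es2real: "map cnj es2 = es2" using esreal unfolding es_def by simp
    have "cnj e0 = e0" using esreal k0 unfolding es_def es1r by (cases k) auto
    then obtain l where e0l: "e0 = complex_of_real l" by (metis Reals_cnj_iff Reals_cases)
    define B where "B = mat_adjoint U * A * mat_conj U"
    have Bc: "B \<in> carrier_mat n n" unfolding B_def using Uc A by auto
    have BB: "B * mat_conj B = D"
      unfolding B_def D_def UMU[symmetric] M_def using Uc A by (simp add: am as mc cm cUUB)
    have aBB: "mat_adjoint B * B = mat_adjoint (mat_conj U) * (mat_adjoint A * A) * mat_conj U"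
      unfolding B_def using Uc A by (simp add: am as mc cm adj_conj_comm UUB)
    have cpB: "char_poly (mat_adjoint B * B) = char_poly (mat_adjoint A * A)"
      unfolding aBB by (rule char_poly_similar, rule unitary_similar[OF cU]) (use A in auto)
    have trD: "mat_trace M = mat_trace D"
    proof -
      have "mat_trace D = mat_trace ((mat_adjoint U * M) * U)" unfolding D_def UMU ..
      also have "\<dots> = mat_trace (U * (mat_adjoint U * M))" by (rule mat_trace_comm) (use Uc Mc in auto)
      also have "U * (mat_adjoint U * M) = M" using UUB[OF Mc] .
      finally show ?thesis by simp
    qed
    have cD: "mat_conj D = D" unfolding D_def conj_diagm esreal ..
    have DB: "D * B = B * D"
    proof -
      have cBB: "mat_conj B * B = D" using cm[of B "mat_conj B"] Bc BB cD by simp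
      have "D * B = B * (mat_conj B * B)" unfolding BB[symmetric] using Bc by (simp add: as)
      thus ?thesis unfolding cBB .
    qed
    have comm: "\<And>i j. i < n \<Longrightarrow> j < n \<Longrightarrow> es ! i * B $$ (i,j) = B $$ (i,j) * es ! j"
    proof -
      fix i j assume i: "i < n" and j: "j < n"
      have 1: "(D * B) $$ (i,j) = es ! i * B $$ (i,j)" unfolding D_def by (rule diagm_mult_left[OF Bc lenes i j])
      have 2: "(B * D) $$ (i,j) = B $$ (i,j) * es ! j" unfolding D_def by (rule diagm_mult_right[OF Bc lenes i j])
      have "(D * B) $$ (i,j) = (B * D) $$ (i,j)" using DB by simp
      thus "es ! i * B $$ (i,j) = B $$ (i,j) * es ! j" unfolding 1 2 .
    qed
    have len1: "length es1 = k" unfolding k_def ..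
    have esi1: "\<And>i. i < k \<Longrightarrow> es ! i = e0" unfolding es_def using es1r by (simp add: nth_append)
    have esi2: "\<And>i. k \<le> i \<Longrightarrow> i < n \<Longrightarrow> es ! i \<noteq> e0"
    proof -
      fix i assume ik: "k \<le> i" "i < n"
      have 1: "es ! i = es2 ! (i - k)" unfolding es_def using ik len1 by (simp add: nth_append)
      have "i - k < length es2" using ik nk unfolding n2_def by simp
      hence "es2 ! (i - k) \<in> set es2" by simp
      thus "es ! i \<noteq> e0" unfolding 1 es2_def by auto
    qed
    have Boff1: "\<And>i j. i < k \<Longrightarrow> k \<le> j \<Longrightarrow> j < n \<Longrightarrow> B $$ (i,j) = 0"
    proof -
      fix i j assume ij: "i < k" "k \<le> j" "j < n"
      have "e0 * B $$ (i,j) = B $$ (i,j) * es ! j" using comm[of i j] ij esi1 nk by simp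
      thus "B $$ (i,j) = 0" using esi2[of j] ij by (auto simp: mult.commute)
    qed
    have Boff2: "\<And>i j. j < k \<Longrightarrow> k \<le> i \<Longrightarrow> i < n \<Longrightarrow> B $$ (i,j) = 0"
    proof -
      fix i j assume ij: "j < k" "k \<le> i" "i < n"
      have "es ! i * B $$ (i,j) = B $$ (i,j) * e0" using comm[of i j] ij esi1 nk by simp
      thus "B $$ (i,j) = 0" using esi2[of i] ij by (auto simp: mult.commute)
    qed
    define B1 where "B1 = mat k k (\<lambda>(i,j). B $$ (i,j))"
    define B2 where "B2 = mat n2 n2 (\<lambda>(i,j). B $$ (k + i, k + j))"
    have B1c: "B1 \<in> carrier_mat k k" and B2c: "B2 \<in> carrier_mat n2 n2" unfolding B1_def B2_def by auto
    have Bsplit: "B = four_block_mat B1 (0\<^sub>m k n2) (0\<^sub>m n2 k) B2"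
    proof (rule eq_matI)
      fix i j assume "i < dim_row (four_block_mat B1 (0\<^sub>m k n2) (0\<^sub>m n2 k) B2)"
        "j < dim_col (four_block_mat B1 (0\<^sub>m k n2) (0\<^sub>m n2 k) B2)"
      hence i: "i < n" and j: "j < n" using B1c B2c nk by auto
      show "B $$ (i,j) = four_block_mat B1 (0\<^sub>m k n2) (0\<^sub>m n2 k) B2 $$ (i,j)"
        using i j B1c B2c nk Boff1 Boff2 unfolding B1_def B2_def by auto
    qed (use Bc B1c B2c nk in auto)
    have cBsplit: "mat_conj B = four_block_mat (mat_conj B1) (0\<^sub>m k n2) (0\<^sub>m n2 k) (mat_conj B2)"
      unfolding Bsplit by (rule conj_four_block[OF B1c B2c])
    have aBsplit: "mat_adjoint B = four_block_mat (mat_adjoint B1) (0\<^sub>m k n2) (0\<^sub>m n2 k) (mat_adjoint B2)"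
      unfolding Bsplit by (rule adj_four_block_diag[OF B1c B2c])
    have BBsplit: "B * mat_conj B = four_block_mat (B1 * mat_conj B1) (0\<^sub>m k n2) (0\<^sub>m n2 k) (B2 * mat_conj B2)"
      unfolding cBsplit by (subst Bsplit, rule block_mult_diag) (use B1c B2c in auto)
    have aBBsplit: "mat_adjoint B * B = four_block_mat (mat_adjoint B1 * B1) (0\<^sub>m k n2) (0\<^sub>m n2 k) (mat_adjoint B2 * B2)"
      unfolding aBsplit by (subst Bsplit, rule block_mult_diag) (use B1c B2c in auto)
    have B1B1: "B1 * mat_conj B1 = complex_of_real l \<cdot>\<^sub>m 1\<^sub>m k"
    proof (rule eq_matI)
      fix i j assume "i < dim_row (complex_of_real l \<cdot>\<^sub>m 1\<^sub>m k)" "j < dim_col (complex_of_real l \<cdot>\<^sub>m 1\<^sub>m k)"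
      hence i: "i < k" and j: "j < k" by auto
      have "(B1 * mat_conj B1) $$ (i,j) = (B * mat_conj B) $$ (i,j)" unfolding BBsplit using i j B1c B2c by simp
      also have "\<dots> = (if i = j then e0 else 0)" unfolding BB D_def using i j nk lenes esi1 by simp
      finally show "(B1 * mat_conj B1) $$ (i,j) = (complex_of_real l \<cdot>\<^sub>m 1\<^sub>m k) $$ (i,j)"
        using i j e0l by simp
    qed (use B1c in auto)
    have B2B2: "B2 * mat_conj B2 = diagm es2"
    proof (rule eq_matI)
      fix i j assume "i < dim_row (diagm es2)" "j < dim_col (diagm es2)"
      hence i: "i < n2" and j: "j < n2" unfolding n2_def by auto
      have "(B2 * mat_conj B2) $$ (i,j) = (B * mat_conj B) $$ (k + i, k + j)" unfolding BBsplit using i j B1c B2c by simp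
      also have "\<dots> = (if i = j then es2 ! i else 0)" unfolding BB D_def using i j nk lenes
        unfolding es_def k_def by (simp add: nth_append)
      finally show "(B2 * mat_conj B2) $$ (i,j) = diagm es2 $$ (i,j)" using i j unfolding n2_def by simp
    qed (use B2c n2_def in auto)
    have herm2: "hermitian_mat (B2 * mat_conj B2)"
      unfolding hermitian_mat_def B2B2 adj_diagm es2real by simp
    obtain as1 where as1: "char_poly (mat_adjoint B1 * B1) = (\<Prod>a\<leftarrow>as1. [:-a,1:])"
      using char_poly_factorized[OF mult_carrier_mat[OF adj_carrier[OF B1c] B1c]] by auto
    obtain as2 where as2: "char_poly (mat_adjoint B2 * B2) = (\<Prod>a\<leftarrow>as2. [:-a,1:])"
      using char_poly_factorized[OF mult_carrier_mat[OF adj_carrier[OF B2c] B2c]] by auto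
    have "char_poly (mat_adjoint B * B) = char_poly (mat_adjoint B1 * B1) * char_poly (mat_adjoint B2 * B2)"
      by (rule char_poly_0_block[OF aBBsplit]) (use as1 as2 B1c B2c in auto)
    hence "(\<Prod>e\<in>#image_mset sq (mset xs). [:-e,1:]) = (\<Prod>e\<in>#mset as1 + mset as2. [:-e,1:])"
      unfolding cpB cp as1 as2 prod_list_mset sq_def by (simp add: image_mset.compositionality comp_def)
    hence "image_mset sq (mset xs) = mset as1 + mset as2" by (rule prod_lin_inj)
    then obtain X1 X2 where X: "mset xs = X1 + X2" "mset as1 = image_mset sq X1" "mset as2 = image_mset sq X2"
      using image_mset_eq_plusD by blast
    obtain xs1 where xs1: "mset xs1 = X1" using ex_mset by blast
    obtain xs2 where xs2: "mset xs2 = X2" using ex_mset by blast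
    have cp1: "char_poly (mat_adjoint B1 * B1) = (\<Prod>x\<leftarrow>xs1. [:- complex_of_real (x\<^sup>2), 1:])"
      unfolding as1 prod_list_mset X(2) xs1[symmetric] sq_def by (simp add: image_mset.compositionality comp_def)
    have cp2: "char_poly (mat_adjoint B2 * B2) = (\<Prod>x\<leftarrow>xs2. [:- complex_of_real (x\<^sup>2), 1:])"
      unfolding as2 prod_list_mset X(3) xs2[symmetric] sq_def by (simp add: image_mset.compositionality comp_def)
    have nn1: "\<forall>x\<in>set xs1. 0 \<le> x" using nn X(1) xs1 by (metis set_mset_mset set_mset_union UnI1)
    have nn2: "\<forall>x\<in>set xs2. 0 \<le> x" using nn X(1) xs2 by (metis set_mset_mset set_mset_union UnI2)
    obtain P1 T1 where PT1: "mset xs1 = pm P1 + mset T1" "val P1 T1 = l * k" "rok P1"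
      using block[OF B1c B1B1 nn1 cp1] by blast
    have n2n: "n2 < n" using nk k0 by simp
    obtain P2 T2 where PT2: "mset xs2 = pm P2 + mset T2" "mat_trace (B2 * mat_conj B2) = complex_of_real (val P2 T2)" "rok P2"
      using less.IH[OF n2n B2c herm2 nn2 cp2] by blast
    have "mset xs = pm (P1 @ P2) + mset (T1 @ T2)" using X(1) xs1 xs2 PT1(1) PT2(1) by (simp add: ac_simps)
    moreover have "mat_trace (A * mat_conj A) = complex_of_real (val (P1 @ P2) (T1 @ T2))"
    proof -
      have "mat_trace (A * mat_conj A) = sum_list es" unfolding M_def[symmetric] trD D_def mat_trace_diagm ..
      also have "\<dots> = of_nat k * e0 + sum_list es2" unfolding es_def es1r by (simp add: sum_list_replicate)
      also have "sum_list es2 = complex_of_real (val P2 T2)" unfolding PT2(2)[symmetric] B2B2 mat_trace_diagm ..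
      finally show ?thesis unfolding val_append PT1(2) e0l by (simp add: algebra_simps)
    qed
    moreover have "rok (P1 @ P2)" using PT1(3) PT2(3) by simp
    ultimately show ?thesis by blast
  qed
qed


lemma cp_len: "length (concat (map (\<lambda>(a::real,b::real,s::nat). [a,b]) P)) = 2 * length P"
  by (induction P) auto

lemma cp_nth: "i < length P \<Longrightarrow>
  concat (map (\<lambda>(a::real,b::real,s::nat). [a,b]) P) ! (2*i) = fst (P!i) \<and>
  concat (map (\<lambda>(a::real,b::real,s::nat). [a,b]) P) ! (2*i+1) = fst (snd (P!i))"
proof (induction P arbitrary: i)
  case Nil then show ?case by simp
next
  case (Cons x P)
  obtain a b s where x: "x = (a,b,s)" by (cases x) auto
  show ?case
  proof (cases i)
    case 0 then show ?thesis using x by simp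
  next
    case (Suc i')
    have "i' < length P" using Cons.prems Suc by simp
    from Cons.IH[OF this] show ?thesis using x Suc by (simp add: nth_append)
  qed
qed

lemma part1:
  fixes A :: "complex mat"
  assumes A: "A \<in> carrier_mat d d" and sv: "sv_of A d \<sigma>" and herm: "hermitian_mat (A * mat_conj A)"
  shows "\<exists>\<tau> r \<rho>. \<tau> permutes {..<d} \<and> even r \<and> r \<le> d \<and> (\<forall>i<r div 2. \<rho> i \<in> {0, 1}) \<and>
                mat_trace (A * mat_conj A) = complex_of_real (trace_formula d \<sigma> \<tau> r \<rho>)"
proof -
  define xs where "xs = map \<sigma> [0..<d]"
  have nn: "\<forall>x\<in>set xs. 0 \<le> x" using sv unfolding sv_of_def xs_def by auto
  have cp: "char_poly (mat_adjoint A * A) = (\<Prod>x\<leftarrow>xs. [:- complex_of_real (x\<^sup>2), 1:])"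
  proof -
    have "char_poly (mat_adjoint A * A) = (\<Prod>i<d. [:- complex_of_real ((\<sigma> i)\<^sup>2), 1:])"
      using sv unfolding sv_of_def by simp
    also have "\<dots> = (\<Prod>i\<leftarrow>[0..<d]. [:- complex_of_real ((\<sigma> i)\<^sup>2), 1:])"
      by (subst prod.distinct_set_conv_list[symmetric]) (auto simp: atLeast0LessThan)
    finally show ?thesis unfolding xs_def by (simp add: comp_def)
  qed
  obtain P T where PT: "mset xs = pm P + mset T" "mat_trace (A * mat_conj A) = complex_of_real (val P T)" "rok P"
    using main[OF A herm nn cp] by blast
  define L where "L = concat (map (\<lambda>(a,b,s). [a,b]) P) @ T"
  have mL: "mset L = mset (map \<sigma> [0..<d])" using PT(1) unfolding L_def pm_def xs_def by simp
  obtain p where p: "p permutes {..<length (map \<sigma> [0..<d])}" "permute_list p (map \<sigma> [0..<d]) = L"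
    using mset_eq_permutation[OF mL] by blast
  have pd: "p permutes {..<d}" using p(1) by simp
  have lenL: "length L = d" using mL by (metis length_map length_upt minus_nat.diff_0 size_mset)
  have Lnth: "\<And>i. i < d \<Longrightarrow> L ! i = \<sigma> (p i)"
  proof -
    fix i assume i: "i < d"
    have "p i < d" using pd i by (meson lessThan_iff permutes_in_image)
    thus "L ! i = \<sigma> (p i)" using p(2)[symmetric] i by (simp add: permute_list_def)
  qed
  define r where "r = 2 * length P"
  define \<rho> where "\<rho> = (\<lambda>i. snd (snd (P ! i)))"
  have lenL2: "d = r + length T" using lenL unfolding L_def r_def by (simp add: cp_len)
  have rok': "\<forall>i<r div 2. \<rho> i \<in> {0,1}"
  proof (intro allI impI)
    fix i assume "i < r div 2"
    hence mem: "P ! i \<in> set P" unfolding r_def by simp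
    have "(\<lambda>(a,b,s). s \<in> {0,1}) (P ! i)" using PT(3) mem unfolding rok_def by (rule bspec)
    thus "\<rho> i \<in> {0,1}" unfolding \<rho>_def by (cases "P ! i") simp
  qed
  have f1: "(\<Sum>i<r div 2. (-1) ^ (\<rho> i) * \<sigma> (p (2*i)) * \<sigma> (p (2*i+1))) = (\<Sum>(a,b,s)\<leftarrow>P. (-1)^s * a * b)"
  proof -
    have rd: "r div 2 = length P" unfolding r_def by simp
    have "(\<Sum>i<length P. (-1) ^ (\<rho> i) * \<sigma> (p (2*i)) * \<sigma> (p (2*i+1))) =
      (\<Sum>i<length P. (\<lambda>(a,b,s). (-1)^s * a * b) (P ! i))"
    proof (intro sum.cong refl)
      fix i assume "i \<in> {..<length P}"
      hence i: "i < length P" by simp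
      have "2*i+1 < d" using i lenL2 unfolding r_def by simp
      hence "\<sigma> (p (2*i)) = L ! (2*i)" "\<sigma> (p (2*i+1)) = L ! (2*i+1)" using Lnth by auto
      moreover have "L ! (2*i) = fst (P!i)" "L ! (2*i+1) = fst (snd (P!i))"
        using cp_nth[OF i] i unfolding L_def by (auto simp: nth_append cp_len)
      ultimately show "(-1) ^ (\<rho> i) * \<sigma> (p (2*i)) * \<sigma> (p (2*i+1)) = (\<lambda>(a,b,s). (-1)^s * a * b) (P ! i)"
        unfolding \<rho>_def by (cases "P ! i") auto
    qed
    also have "\<dots> = (\<Sum>(a,b,s)\<leftarrow>P. (-1)^s * a * b)"
      by (subst sum_list_sum_nth) (simp add: atLeast0LessThan)
    finally show ?thesis unfolding rd .
  qed
  have f2: "(\<Sum>i\<in>{r..<d}. (\<sigma> (p i))\<^sup>2) = (\<Sum>x\<leftarrow>T. x\<^sup>2)"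
  proof -
    have "(\<Sum>i\<in>{r..<d}. (\<sigma> (p i))\<^sup>2) = (\<Sum>i\<in>{r..<d}. (T ! (i - r))\<^sup>2)"
    proof (intro sum.cong refl)
      fix i assume i: "i \<in> {r..<d}"
      hence "\<sigma> (p i) = L ! i" using Lnth by auto
      also have "\<dots> = T ! (i - r)" unfolding L_def using i unfolding r_def by (simp add: nth_append cp_len)
      finally show "(\<sigma> (p i))\<^sup>2 = (T ! (i - r))\<^sup>2" by simp
    qed
    also have "\<dots> = (\<Sum>i\<in>{0..<length T}. (T ! i)\<^sup>2)"
      unfolding lenL2 using sum.shift_bounds_nat_ivl[of "\<lambda>i. (T ! (i - r))\<^sup>2" 0 r "length T"]
      by (simp add: add.commute)
    also have "\<dots> = (\<Sum>x\<leftarrow>T. x\<^sup>2)" by (subst sum_list_sum_nth) simp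
    finally show ?thesis .
  qed
  have "trace_formula d \<sigma> p r \<rho> = val P T" unfolding trace_formula_def val_def f1 f2 ..
  thus ?thesis using pd rok' PT(2) lenL2 unfolding r_def
    by (intro exI[of _ p] exI[of _ r] exI[of _ \<rho>]) (auto simp: r_def)
qed


lemma sum_single: "finite S \<Longrightarrow> a \<in> S \<Longrightarrow> (\<And>i. i \<in> S \<Longrightarrow> i \<noteq> a \<Longrightarrow> g i = 0) \<Longrightarrow> sum g S = g a"
  by (simp add: sum.remove sum.neutral)

lemma sum_pairs: "(\<Sum>i<2*(m::nat). f i) = (\<Sum>p<m. f (2*p) + f (2*p+1))"
  by (induction m) (auto simp: add.assoc)

lemma part2:
  fixes \<sigma> :: "nat \<Rightarrow> real"
  assumes tau: "\<tau> permutes {..<d}" and ev: "even r" and rd: "r \<le> d"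
    and nn: "\<forall>i<d. 0 \<le> \<sigma> i" and mono: "\<forall>i j. i \<le> j \<longrightarrow> j < d \<longrightarrow> \<sigma> j \<le> \<sigma> i"
  shows "\<exists>A::complex mat. A \<in> carrier_mat d d \<and> sv_of A d \<sigma> \<and>
                mat_trace (A * mat_conj A) = complex_of_real (trace_formula d \<sigma> \<tau> r \<rho>)"
proof -
  define \<pi> where "\<pi> = (\<lambda>i::nat. if i < r then (if even i then i + 1 else i - 1) else i)"
  define s where "s = (\<lambda>i::nat. if i < r \<and> odd i then (-1::real) ^ (\<rho> (i div 2)) else 1)"
  define A where "A = mat d d (\<lambda>(i,j). if j = \<pi> i then complex_of_real (s i * \<sigma> (\<tau> j)) else 0)"
  have Ac: "A \<in> carrier_mat d d" unfolding A_def by simp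
  have \<pi>d: "\<And>i. i < d \<Longrightarrow> \<pi> i < d"
  proof -
    fix i assume i: "i < d"
    show "\<pi> i < d"
    proof (cases "i < r")
      case True
      show ?thesis
      proof (cases "even i")
        case True
        hence "i + 1 \<noteq> r" using ev by auto
        thus ?thesis using \<open>i < r\<close> True rd unfolding \<pi>_def by simp
      qed (use True i in \<open>auto simp: \<pi>_def\<close>)
    qed (use i in \<open>auto simp: \<pi>_def\<close>)
  qed
  have \<pi>\<pi>: "\<And>i. \<pi> (\<pi> i) = i"
  proof -
    fix i
    show "\<pi> (\<pi> i) = i"
    proof (cases "i < r")
      case True
      show ?thesis
      proof (cases "even i")
        case True
        hence "i + 1 \<noteq> r" using ev by auto
        thus ?thesis using \<open>i < r\<close> True unfolding \<pi>_def by simp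
      next
        case False
        hence "i \<ge> 1" by (cases i) auto
        thus ?thesis using \<open>i < r\<close> False unfolding \<pi>_def by auto
      qed
    qed (auto simp: \<pi>_def)
  qed
  have \<pi>eq: "\<And>i j. j = \<pi> i \<longleftrightarrow> i = \<pi> j" using \<pi>\<pi> by metis
  have s2: "\<And>i. s i * s i = 1" unfolding s_def by (simp add: power_mult_distrib[symmetric])
  have Aent: "\<And>i j. i < d \<Longrightarrow> j < d \<Longrightarrow> A $$ (i,j) = (if i = \<pi> j then complex_of_real (s i * \<sigma> (\<tau> j)) else 0)"
    unfolding A_def using \<pi>eq by simp
  have AA: "mat_adjoint A * A = diagm (map (\<lambda>j. complex_of_real ((\<sigma> (\<tau> j))\<^sup>2)) [0..<d])"
  proof (rule eq_matI)
    fix j l assume "j < dim_row (diagm (map (\<lambda>j. complex_of_real ((\<sigma> (\<tau> j))\<^sup>2)) [0..<d]))"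
      "l < dim_col (diagm (map (\<lambda>j. complex_of_real ((\<sigma> (\<tau> j))\<^sup>2)) [0..<d]))"
    hence j: "j < d" and l: "l < d" by auto
    have "(mat_adjoint A * A) $$ (j,l) = (\<Sum>i<d. cnj (A $$ (i,j)) * A $$ (i,l))"
      using Ac j l by (simp add: me)
    also have "\<dots> = cnj (A $$ (\<pi> j, j)) * A $$ (\<pi> j, l)"
      by (rule sum_single) (use j l \<pi>d Aent in auto)
    also have "\<dots> = (if j = l then complex_of_real ((\<sigma> (\<tau> j))\<^sup>2) else 0)"
    proof -
      have "(\<pi> j = \<pi> l) = (j = l)" using \<pi>\<pi> by metis
      moreover have "s (\<pi> j) * s (\<pi> j) = 1" by (rule s2)
      ultimately show ?thesis using Aent[OF \<pi>d[OF j] j] Aent[OF \<pi>d[OF j] l] \<pi>\<pi>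
        by (auto simp: power2_eq_square algebra_simps simp flip: of_real_mult)
    qed
    also have "\<dots> = diagm (map (\<lambda>j. complex_of_real ((\<sigma> (\<tau> j))\<^sup>2)) [0..<d]) $$ (j,l)" using j l by simp
    finally show "(mat_adjoint A * A) $$ (j,l) = diagm (map (\<lambda>j. complex_of_real ((\<sigma> (\<tau> j))\<^sup>2)) [0..<d]) $$ (j,l)" .
  qed (use Ac in auto)
  have cp: "char_poly (mat_adjoint A * A) = (\<Prod>i<d. [:- complex_of_real ((\<sigma> i)\<^sup>2), 1:])"
  proof -
    have "char_poly (mat_adjoint A * A) = (\<Prod>j\<leftarrow>[0..<d]. [:- complex_of_real ((\<sigma> (\<tau> j))\<^sup>2), 1:])"
      unfolding AA char_poly_diagm by (simp add: comp_def)
    also have "\<dots> = (\<Prod>j<d. [:- complex_of_real ((\<sigma> (\<tau> j))\<^sup>2), 1:])"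
      by (subst prod.distinct_set_conv_list[symmetric]) (auto simp: atLeast0LessThan)
    also have "\<dots> = (\<Prod>i<d. [:- complex_of_real ((\<sigma> i)\<^sup>2), 1:])"
      using prod.permute[OF tau, of "\<lambda>i. [:- complex_of_real ((\<sigma> i)\<^sup>2), 1:]"] by (simp add: comp_def)
    finally show ?thesis .
  qed
  have sv: "sv_of A d \<sigma>" unfolding sv_of_def using Ac nn mono cp by auto
  define g where "g = (\<lambda>i. s i * s (\<pi> i) * \<sigma> (\<tau> (\<pi> i)) * \<sigma> (\<tau> i))"
  have diag: "\<And>i. i < d \<Longrightarrow> (A * mat_conj A) $$ (i,i) = complex_of_real (g i)"
  proof -
    fix i assume i: "i < d"
    have "(A * mat_conj A) $$ (i,i) = (\<Sum>j<d. A $$ (i,j) * cnj (A $$ (j,i)))"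
      using Ac i by (simp add: me)
    also have "\<dots> = A $$ (i, \<pi> i) * cnj (A $$ (\<pi> i, i))"
      by (rule sum_single) (use i \<pi>d Aent \<pi>eq in auto)
    also have "\<dots> = complex_of_real (g i)"
      using Aent[OF i \<pi>d[OF i]] Aent[OF \<pi>d[OF i] i] \<pi>\<pi> unfolding g_def by (simp flip: of_real_mult)
    finally show "(A * mat_conj A) $$ (i,i) = complex_of_real (g i)" .
  qed
  have tr: "mat_trace (A * mat_conj A) = complex_of_real (\<Sum>i<d. g i)"
    unfolding mat_trace_def of_real_sum using Ac diag by simp
  have "(\<Sum>i<d. g i) = (\<Sum>i<r. g i) + (\<Sum>i\<in>{r..<d}. g i)"
    using rd by (simp add: atLeast0LessThan[symmetric] sum.atLeastLessThan_concat)
  also have "(\<Sum>i\<in>{r..<d}. g i) = (\<Sum>i\<in>{r..<d}. (\<sigma> (\<tau> i))\<^sup>2)"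
    by (intro sum.cong refl) (auto simp: g_def \<pi>_def s_def power2_eq_square)
  also have "(\<Sum>i<r. g i) = 2 * (\<Sum>p<r div 2. (-1) ^ (\<rho> p) * \<sigma> (\<tau> (2*p)) * \<sigma> (\<tau> (2*p+1)))"
  proof -
    have r2: "r = 2 * (r div 2)" using ev by simp
    have "(\<Sum>i<r. g i) = (\<Sum>p<r div 2. g (2*p) + g (2*p+1))" by (subst r2, rule sum_pairs)
    also have "\<dots> = (\<Sum>p<r div 2. 2 * ((-1) ^ (\<rho> p) * \<sigma> (\<tau> (2*p)) * \<sigma> (\<tau> (2*p+1))))"
    proof (intro sum.cong refl)
      fix p assume "p \<in> {..<r div 2}"
      hence p: "2*p+1 < r" using ev by auto
      have "\<pi> (2*p) = 2*p+1" "\<pi> (2*p+1) = 2*p" using p unfolding \<pi>_def by auto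
      moreover have "s (2*p) = 1" "s (2*p+1) = (-1) ^ (\<rho> p)" using p unfolding s_def by auto
      ultimately show "g (2*p) + g (2*p+1) = 2 * ((-1) ^ (\<rho> p) * \<sigma> (\<tau> (2*p)) * \<sigma> (\<tau> (2*p+1)))"
        unfolding g_def by (simp add: algebra_simps)
    qed
    finally show ?thesis by (simp add: sum_distrib_left)
  qed
  finally have "(\<Sum>i<d. g i) = trace_formula d \<sigma> \<tau> r \<rho>" unfolding trace_formula_def by simp
  thus ?thesis using Ac sv tr by auto
qed


theorem proposition6:
  shows "(\<forall>(A::complex mat) d \<sigma>.
            A \<in> carrier_mat d d \<longrightarrow> sv_of A d \<sigma> \<longrightarrow> hermitian_mat (A * mat_conj A) \<longrightarrow>
            (\<exists>\<tau> r \<rho>. \<tau> permutes {..<d} \<and> even r \<and> r \<le> d \<and> (\<forall>i<r div 2. \<rho> i \<in> {0, 1}) \<and>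
                mat_trace (A * mat_conj A) = complex_of_real (trace_formula d \<sigma> \<tau> r \<rho>)))
       \<and> (\<forall>d \<tau> r \<rho> (\<sigma>::nat \<Rightarrow> real).
            \<tau> permutes {..<d} \<longrightarrow> even r \<longrightarrow> r \<le> d \<longrightarrow> (\<forall>i<r div 2. \<rho> i \<in> {0, 1}) \<longrightarrow>
            (\<forall>i<d. 0 \<le> \<sigma> i) \<longrightarrow> (\<forall>i j. i \<le> j \<longrightarrow> j < d \<longrightarrow> \<sigma> j \<le> \<sigma> i) \<longrightarrow>
            (\<exists>A::complex mat. A \<in> carrier_mat d d \<and> sv_of A d \<sigma> \<and>
                mat_trace (A * mat_conj A) = complex_of_real (trace_formula d \<sigma> \<tau> r \<rho>)))"
  apply (rule conjI)
   apply (intro allI impI)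
   apply (rule part1; assumption)
  apply (intro allI impI)
  apply (rule part2; assumption)
  done

end
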